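(* Let $(\mathbf A,\exists)$ be a monadic Pavelka algebra with $\mathbf A$ semisimple, and let $\forall(x)=\neg\exists(\neg x)$. The following are equivalent: (i) the relation $R\colon\mathrm{Spec_M}\mathbf A\times\mathrm{Spec_M}\mathbf A\to[0,1]$, $R(F,F')=\bigwedge_{a\in A}(\forall(a)/F'\rightarrow a/F)$, is $\{0,1\}$-valued (i.e. $(\mathbf A,\exists)$ is induced by a boolean equivalence); (ii) $(\mathbf A,\exists)$ is a monadic Pavelka algebra in the original sense, i.e. for all $x,y\in A$ and all constants $\mathbf r$: $x\le\exists x$; $\exists(x\vee y)=\exists x\vee\exists y$; $\exists(\neg\exists x)=\neg\exists x$; $\exists(\exists x\oplus\exists y)=\exists x\oplus\exists y$; $\exists(x\oplus x)=\exists x\oplus\exists x$; $\exists(x\cdot x)=\exists x\cdot\exists x$; and $\exists\mathbf r=\mathbf r$; (iii) $\forall(x)\cdot\forall(y)\le\forall(x\cdot y)$ for all $x,y\in A$.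
   Context: An MV-algebra $(A;\oplus,\neg,0)$ carries derived operations $1=\neg0$, $x\cdot y=\neg(\neg x\oplus\neg y)$, $x\rightarrow y=\neg x\oplus y$, $x\vee y=\neg(\neg x\oplus y)\oplus y$, $x\wedge y=\neg(\neg x\vee\neg y)$, order $x\le y$ iff $\neg x\oplus y=1$. The standard MV-algebra is $[0,1]$ with $x\oplus y=\min\{x+y,1\}$, $\neg x=1-x$. A Pavelka algebra is $\mathbf A=(A;\oplus,\neg,\{\mathbf r\mid r\in[0,1]\cap\mathbb Q\})$ with $(A;\oplus,\neg,\mathbf 0)$ an MV-algebra, $\mathbf r\oplus\mathbf s=\mathbf t$ whenever $\min\{r+s,1\}=t$, $\neg\mathbf r=\mathbf s$ whenever $1-r=s$. Filters are filters of the MV-reduct; $\mathrm{Spec_M}\mathbf A$ is the set of maximal proper filters; for $F\in\mathrm{Spec_M}\mathbf A$, $\mathbf A/F$ embeds uniquely into $[0,1]$ and $x/F$ is identified with its image. Semisimple: MV-reduct is a subdirect product of simple MV-algebras. A monadic Pavelka algebra is $(\mathbf A,\exists)$ with $\exists$ a closure operator (monotone, $x\le\exists x$, $\exists\exists x=\exists x$) such that $\exists(\neg\exists(x))=\neg\exists(x)$ and $\mathbf r\cdot\exists(x)=\exists(\mathbf r\cdot x)$ for all $x$ and constants $\mathbf r$. *)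

theory Defs
  imports Complex_Main
begin

definition mv_algebra :: "'a set \<Rightarrow> ('a \<Rightarrow> 'a \<Rightarrow> 'a) \<Rightarrow> ('a \<Rightarrow> 'a) \<Rightarrow> 'a \<Rightarrow> bool" where
  "mv_algebra A p n z \<longleftrightarrow>
     z \<in> A \<and> (\<forall>x\<in>A. \<forall>y\<in>A. p x y \<in> A) \<and> (\<forall>x\<in>A. n x \<in> A) \<and>
     (\<forall>x\<in>A. \<forall>y\<in>A. \<forall>w\<in>A. p (p x y) w = p x (p y w)) \<and>
     (\<forall>x\<in>A. \<forall>y\<in>A. p x y = p y x) \<and>
     (\<forall>x\<in>A. p x z = x) \<and>
     (\<forall>x\<in>A. n (n x) = x) \<and>
     (\<forall>x\<in>A. p x (n z) = n z) \<and>
     (\<forall>x\<in>A. \<forall>y\<in>A. p (n (p (n x) y)) y = p (n (p (n y) x)) x)"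

definition mv_mult :: "('a \<Rightarrow> 'a \<Rightarrow> 'a) \<Rightarrow> ('a \<Rightarrow> 'a) \<Rightarrow> 'a \<Rightarrow> 'a \<Rightarrow> 'a" where
  "mv_mult p n x y = n (p (n x) (n y))"

definition mv_sup :: "('a \<Rightarrow> 'a \<Rightarrow> 'a) \<Rightarrow> ('a \<Rightarrow> 'a) \<Rightarrow> 'a \<Rightarrow> 'a \<Rightarrow> 'a" where
  "mv_sup p n x y = p (n (p (n x) y)) y"

definition mv_le :: "('a \<Rightarrow> 'a \<Rightarrow> 'a) \<Rightarrow> ('a \<Rightarrow> 'a) \<Rightarrow> 'a \<Rightarrow> 'a \<Rightarrow> 'a \<Rightarrow> bool" where
  "mv_le p n z x y \<longleftrightarrow> p (n x) y = n z"

text \<open>Filters of an MV-algebra (1 = n z).\<close>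
definition mv_filter :: "'a set \<Rightarrow> ('a \<Rightarrow> 'a \<Rightarrow> 'a) \<Rightarrow> ('a \<Rightarrow> 'a) \<Rightarrow> 'a \<Rightarrow> 'a set \<Rightarrow> bool" where
  "mv_filter A p n z F \<longleftrightarrow>
     F \<subseteq> A \<and> n z \<in> F \<and> (\<forall>x\<in>F. \<forall>y\<in>F. mv_mult p n x y \<in> F) \<and>
     (\<forall>x\<in>F. \<forall>y\<in>A. mv_le p n z x y \<longrightarrow> y \<in> F)"

definition spec_M :: "'a set \<Rightarrow> ('a \<Rightarrow> 'a \<Rightarrow> 'a) \<Rightarrow> ('a \<Rightarrow> 'a) \<Rightarrow> 'a \<Rightarrow> 'a set set" where
  "spec_M A p n z = {F. mv_filter A p n z F \<and> F \<noteq> A \<and>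
       (\<forall>G. mv_filter A p n z G \<and> F \<subseteq> G \<and> G \<noteq> A \<longrightarrow> G = F)}"

definition mv_semisimple :: "'a set \<Rightarrow> ('a \<Rightarrow> 'a \<Rightarrow> 'a) \<Rightarrow> ('a \<Rightarrow> 'a) \<Rightarrow> 'a \<Rightarrow> bool" where
  "mv_semisimple A p n z \<longleftrightarrow> A \<inter> \<Inter>(spec_M A p n z) = {n z}"

definition mv_hom_unit :: "'a set \<Rightarrow> ('a \<Rightarrow> 'a \<Rightarrow> 'a) \<Rightarrow> ('a \<Rightarrow> 'a) \<Rightarrow> 'a \<Rightarrow> ('a \<Rightarrow> real) \<Rightarrow> bool" where
  "mv_hom_unit A p n z h \<longleftrightarrow>
     (\<forall>x\<in>A. 0 \<le> h x \<and> h x \<le> 1) \<and> h z = 0 \<and>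
     (\<forall>x\<in>A. \<forall>y\<in>A. h (p x y) = min (h x + h y) 1) \<and>
     (\<forall>x\<in>A. h (n x) = 1 - h x)"

text \<open>x/F, identified with its image under the unique embedding of A/F into [0,1]:
  the value at x of the (unique) homomorphism A \<rightarrow> [0,1] whose 1-filter is F.\<close>
definition quot_val :: "'a set \<Rightarrow> ('a \<Rightarrow> 'a \<Rightarrow> 'a) \<Rightarrow> ('a \<Rightarrow> 'a) \<Rightarrow> 'a \<Rightarrow> 'a set \<Rightarrow> 'a \<Rightarrow> real" where
  "quot_val A p n z F x =
     (THE r. \<exists>h. mv_hom_unit A p n z h \<and> {y\<in>A. h y = 1} = F \<and> h x = r)"

definition pavelka :: "'a set \<Rightarrow> ('a \<Rightarrow> 'a \<Rightarrow> 'a) \<Rightarrow> ('a \<Rightarrow> 'a) \<Rightarrow> (rat \<Rightarrow> 'a) \<Rightarrow> bool" where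
  "pavelka A p n c \<longleftrightarrow>
     mv_algebra A p n (c 0) \<and>
     (\<forall>r. 0 \<le> r \<and> r \<le> 1 \<longrightarrow> c r \<in> A) \<and>
     (\<forall>r s. 0 \<le> r \<and> r \<le> 1 \<and> 0 \<le> s \<and> s \<le> 1 \<longrightarrow> p (c r) (c s) = c (min (r + s) 1)) \<and>
     (\<forall>r. 0 \<le> r \<and> r \<le> 1 \<longrightarrow> n (c r) = c (1 - r))"

definition monadic_pavelka ::
  "'a set \<Rightarrow> ('a \<Rightarrow> 'a \<Rightarrow> 'a) \<Rightarrow> ('a \<Rightarrow> 'a) \<Rightarrow> (rat \<Rightarrow> 'a) \<Rightarrow> ('a \<Rightarrow> 'a) \<Rightarrow> bool" where
  "monadic_pavelka A p n c e \<longleftrightarrow>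
     pavelka A p n c \<and>
     (\<forall>x\<in>A. e x \<in> A) \<and>
     (\<forall>x\<in>A. \<forall>y\<in>A. mv_le p n (c 0) x y \<longrightarrow> mv_le p n (c 0) (e x) (e y)) \<and>
     (\<forall>x\<in>A. mv_le p n (c 0) x (e x)) \<and>
     (\<forall>x\<in>A. e (e x) = e x) \<and>
     (\<forall>x\<in>A. e (n (e x)) = n (e x)) \<and>
     (\<forall>r x. 0 \<le> r \<and> r \<le> 1 \<and> x \<in> A \<longrightarrow> mv_mult p n (c r) (e x) = e (mv_mult p n (c r) x))"

definition univ_q :: "('a \<Rightarrow> 'a) \<Rightarrow> ('a \<Rightarrow> 'a) \<Rightarrow> 'a \<Rightarrow> 'a" where
  "univ_q n e x = n (e (n x))"

definition rel_R ::
  "'a set \<Rightarrow> ('a \<Rightarrow> 'a \<Rightarrow> 'a) \<Rightarrow> ('a \<Rightarrow> 'a) \<Rightarrow> 'a \<Rightarrow> ('a \<Rightarrow> 'a) \<Rightarrow> 'a set \<Rightarrow> 'a set \<Rightarrow> real" where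
  "rel_R A p n z e F F' =
     (INF a\<in>A. min 1 (1 - quot_val A p n z F' (univ_q n e a) + quot_val A p n z F a))"

definition orig_monadic ::
  "'a set \<Rightarrow> ('a \<Rightarrow> 'a \<Rightarrow> 'a) \<Rightarrow> ('a \<Rightarrow> 'a) \<Rightarrow> (rat \<Rightarrow> 'a) \<Rightarrow> ('a \<Rightarrow> 'a) \<Rightarrow> bool" where
  "orig_monadic A p n c e \<longleftrightarrow>
     (\<forall>x\<in>A. mv_le p n (c 0) x (e x)) \<and>
     (\<forall>x\<in>A. \<forall>y\<in>A. e (mv_sup p n x y) = mv_sup p n (e x) (e y)) \<and>
     (\<forall>x\<in>A. e (n (e x)) = n (e x)) \<and>
     (\<forall>x\<in>A. \<forall>y\<in>A. e (p (e x) (e y)) = p (e x) (e y)) \<and>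
     (\<forall>x\<in>A. e (p x x) = p (e x) (e x)) \<and>
     (\<forall>x\<in>A. e (mv_mult p n x x) = mv_mult p n (e x) (e x)) \<and>
     (\<forall>r. 0 \<le> r \<and> r \<le> 1 \<longrightarrow> e (c r) = c r)"

end

theory Submission
  imports Defs
begin


locale mvA =
  fixes A :: "'a set" and p :: "'a \<Rightarrow> 'a \<Rightarrow> 'a" and n :: "'a \<Rightarrow> 'a" and z :: 'a
  assumes mv: "mv_algebra A p n z"
begin

lemma zA[simp]: "z \<in> A" and pA[simp]: "x \<in> A \<Longrightarrow> y \<in> A \<Longrightarrow> p x y \<in> A"
  and nA[simp]: "x \<in> A \<Longrightarrow> n x \<in> A"
  and assoc: "x \<in> A \<Longrightarrow> y \<in> A \<Longrightarrow> w \<in> A \<Longrightarrow> p (p x y) w = p x (p y w)"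
  and comm: "x \<in> A \<Longrightarrow> y \<in> A \<Longrightarrow> p x y = p y x"
  and zr[simp]: "x \<in> A \<Longrightarrow> p x z = x"
  and nn[simp]: "x \<in> A \<Longrightarrow> n (n x) = x"
  and oner[simp]: "x \<in> A \<Longrightarrow> p x (n z) = n z"
  and mv6: "x \<in> A \<Longrightarrow> y \<in> A \<Longrightarrow> p (n (p (n x) y)) y = p (n (p (n y) x)) x"
  using mv unfolding mv_algebra_def by blast+

lemma oneA[simp]: "n z \<in> A" by simp

lemma zl[simp]: "x \<in> A \<Longrightarrow> p z x = x" using comm[of z x] by simp
lemma onel[simp]: "x \<in> A \<Longrightarrow> p (n z) x = n z" using comm[of "n z" x] by simp

lemma lcomm: "x \<in> A \<Longrightarrow> y \<in> A \<Longrightarrow> w \<in> A \<Longrightarrow> p x (p y w) = p y (p x w)"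
proof -
  assume a: "x \<in> A" "y \<in> A" "w \<in> A"
  have "p x (p y w) = p (p x y) w" using a by (simp add: assoc)
  also have "\<dots> = p (p y x) w" using a comm[of x y] by simp
  also have "\<dots> = p y (p x w)" using a by (simp add: assoc)
  finally show ?thesis .
qed

lemmas ac = assoc comm lcomm

lemma compl2[simp]: "x \<in> A \<Longrightarrow> p (n x) x = n z"
proof -
  assume x: "x \<in> A"
  have "p (n (p (n x) (n z))) (n z) = p (n (p (n (n z)) x)) x" by (rule mv6[OF x oneA])
  moreover have "p (n (p (n x) (n z))) (n z) = n z" using x by simp
  moreover have "p (n (p (n (n z)) x)) x = p (n x) x" using x by simp
  ultimately show ?thesis by metis
qed
lemma compl[simp]: "x \<in> A \<Longrightarrow> p x (n x) = n z" using compl2[of "n x"] by simp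

abbreviation le (infix "\<preceq>" 50) where "x \<preceq> y \<equiv> mv_le p n z x y"
abbreviation mul (infixl "\<otimes>" 70) where "x \<otimes> y \<equiv> mv_mult p n x y"
abbreviation sup (infixl "\<squnion>" 65) where "x \<squnion> y \<equiv> mv_sup p n x y"

lemma mulA[simp]: "x \<in> A \<Longrightarrow> y \<in> A \<Longrightarrow> x \<otimes> y \<in> A" by (simp add: mv_mult_def)
lemma supA[simp]: "x \<in> A \<Longrightarrow> y \<in> A \<Longrightarrow> x \<squnion> y \<in> A" by (simp add: mv_sup_def)
lemma n_mul[simp]: "x \<in> A \<Longrightarrow> y \<in> A \<Longrightarrow> n (x \<otimes> y) = p (n x) (n y)" by (simp add: mv_mult_def)

lemma le_ex: "x \<in> A \<Longrightarrow> y \<in> A \<Longrightarrow> x \<preceq> y \<longleftrightarrow> (\<exists>t\<in>A. y = p x t)"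
proof
  assume x: "x \<in> A" and y: "y \<in> A" and "x \<preceq> y"
  then have "p (n x) y = n z" by (simp add: mv_le_def)
  then have "y = p (n (p (n x) y)) y" using y by simp
  also have "\<dots> = p x (n (p (n y) x))" using mv6[OF x y] x y comm by simp
  finally show "\<exists>t\<in>A. y = p x t" using x y by auto
next
  assume x: "x \<in> A" and y: "y \<in> A" and "\<exists>t\<in>A. y = p x t"
  then obtain t where t: "t \<in> A" "y = p x t" by auto
  then show "x \<preceq> y" using x by (simp add: mv_le_def assoc[symmetric])
qed

lemma le_refl[simp]: "x \<in> A \<Longrightarrow> x \<preceq> x" by (simp add: mv_le_def)

lemma le_trans: "x \<in> A \<Longrightarrow> y \<in> A \<Longrightarrow> w \<in> A \<Longrightarrow> x \<preceq> y \<Longrightarrow> y \<preceq> w \<Longrightarrow> x \<preceq> w"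
proof -
  assume a: "x \<in> A" "y \<in> A" "w \<in> A" "x \<preceq> y" "y \<preceq> w"
  then obtain t1 t2 where t: "t1 \<in> A" "t2 \<in> A" "y = p x t1" "w = p y t2" using le_ex by blast
  then have "w = p x (p t1 t2)" using a by (simp add: assoc)
  then show ?thesis using le_ex a t by auto
qed

lemma le_antisym: "x \<in> A \<Longrightarrow> y \<in> A \<Longrightarrow> x \<preceq> y \<Longrightarrow> y \<preceq> x \<Longrightarrow> x = y"
proof -
  assume x: "x \<in> A" and y: "y \<in> A" and "x \<preceq> y" "y \<preceq> x"
  then have a: "p (n x) y = n z" "p (n y) x = n z" by (auto simp: mv_le_def)
  have "p (n (p (n x) y)) y = p (n (p (n y) x)) x" using mv6[OF x y] .
  then show ?thesis using a x y by simp
qed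

lemma le_one[simp]: "x \<in> A \<Longrightarrow> x \<preceq> n z" by (simp add: mv_le_def)
lemma zero_le[simp]: "x \<in> A \<Longrightarrow> z \<preceq> x" by (simp add: mv_le_def)

lemma p_mono: "x \<in> A \<Longrightarrow> y \<in> A \<Longrightarrow> w \<in> A \<Longrightarrow> x \<preceq> y \<Longrightarrow> p x w \<preceq> p y w"
proof -
  assume x: "x \<in> A" and y: "y \<in> A" and w: "w \<in> A" and "x \<preceq> y"
  then obtain t where t: "t \<in> A" "y = p x t" using le_ex by auto
  then have "p y w = p (p x w) t" using x w by (simp add: assoc comm[of t w])
  then show ?thesis using le_ex x w t by auto
qed

lemma le_p[simp]: "x \<in> A \<Longrightarrow> y \<in> A \<Longrightarrow> x \<preceq> p x y" using le_ex by auto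

lemma n_anti: "x \<in> A \<Longrightarrow> y \<in> A \<Longrightarrow> x \<preceq> y \<Longrightarrow> n y \<preceq> n x"
  by (simp add: mv_le_def comm)

lemma n_anti_iff: "x \<in> A \<Longrightarrow> y \<in> A \<Longrightarrow> n y \<preceq> n x \<longleftrightarrow> x \<preceq> y"
  by (simp add: mv_le_def comm)

lemma mul_mono: "x \<in> A \<Longrightarrow> y \<in> A \<Longrightarrow> w \<in> A \<Longrightarrow> x \<preceq> y \<Longrightarrow> x \<otimes> w \<preceq> y \<otimes> w"
  unfolding mv_mult_def by (simp add: n_anti_iff p_mono n_anti)

lemma mul_comm: "x \<in> A \<Longrightarrow> y \<in> A \<Longrightarrow> x \<otimes> y = y \<otimes> x" by (simp add: mv_mult_def comm)
lemma mul_assoc: "x \<in> A \<Longrightarrow> y \<in> A \<Longrightarrow> w \<in> A \<Longrightarrow> (x \<otimes> y) \<otimes> w = x \<otimes> (y \<otimes> w)"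
  by (simp add: mv_mult_def assoc)
lemma mul_one[simp]: "x \<in> A \<Longrightarrow> x \<otimes> n z = x" by (simp add: mv_mult_def)
lemma mul_zero[simp]: "x \<in> A \<Longrightarrow> x \<otimes> z = z"
  unfolding mv_mult_def by simp
lemma mul_le[simp]: "x \<in> A \<Longrightarrow> y \<in> A \<Longrightarrow> x \<otimes> y \<preceq> x"
  proof -
  assume a: "x \<in> A" "y \<in> A"
  have "n x \<preceq> n (x \<otimes> y)" using a by simp
  then show ?thesis using n_anti_iff[of "x \<otimes> y" x] a by simp
qed

lemma resid: "x \<in> A \<Longrightarrow> y \<in> A \<Longrightarrow> w \<in> A \<Longrightarrow> x \<otimes> y \<preceq> w \<longleftrightarrow> x \<preceq> p (n y) w"
  by (simp add: mv_le_def mv_mult_def assoc)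

lemma resid2: "x \<in> A \<Longrightarrow> y \<in> A \<Longrightarrow> w \<in> A \<Longrightarrow> x \<preceq> p y w \<longleftrightarrow> x \<otimes> n w \<preceq> y"
  using resid[of x "n w" y] by (simp add: comm)

end

context mvA begin
lemma K: assumes x: "x \<in> A" and y: "y \<in> A"
  shows "p (n (p (n x) y)) (p (n y) x) = p (n y) x"
proof -
  define d where "d = n (p (n x) y)"
  define u where "u = p (n y) x"
  have dA: "d \<in> A" and uA: "u \<in> A" using x y by (auto simp: d_def u_def)
  have nd: "n d = p (n x) y" using x y by (simp add: d_def)
  have a: "p (n d) (n y) = n z" using x y by (simp add: nd assoc)
  have "p (n (p (n (n y)) d)) d = p (n (p (n d) (n y))) (n y)" by (rule mv6[OF nA[OF y] dA])
  then have b: "p (n (p y d)) d = n y" using a y dA by simp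
  have "p (n (p (n x) u)) u = p (n (p (n u) x)) x" by (rule mv6[OF x uA])
  moreover have "p (n x) u = n z" using x y by (simp add: u_def lcomm[of "n x" "n y" x])
  ultimately have c1: "u = p (n (p (n u) x)) x" using uA by simp
  have "p (n u) x = p (n (p (n y) x)) x" using x y by (simp add: u_def)
  also have "\<dots> = p (n (p (n x) y)) y" using mv6[OF y x] by simp
  also have "\<dots> = p d y" by (simp add: d_def)
  finally have c2: "u = p (n (p d y)) x" using c1 by simp
  have "p d u = p (p (n (p d y)) d) x" using c2 dA x y
    by (metis assoc comm nA pA)
  also have "\<dots> = p (n y) x" using b comm[OF dA y] by simp
  finally show ?thesis by (simp add: d_def u_def)
qed
end


primrec mvpow :: "('a\<Rightarrow>'a\<Rightarrow>'a) \<Rightarrow> ('a\<Rightarrow>'a) \<Rightarrow> 'a \<Rightarrow> nat \<Rightarrow> 'a \<Rightarrow> 'a" where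
  "mvpow p n z 0 x = n z"
| "mvpow p n z (Suc m) x = mv_mult p n x (mvpow p n z m x)"

context mvA begin

lemma prelin: assumes x: "x \<in> A" and y: "y \<in> A"
  shows "p (n x) y \<squnion> p (n y) x = n z"
proof -
  have "p (n (p (n x) y)) (p (n y) x) = p (n y) x" by (rule K[OF x y])
  then show ?thesis using x y by (simp add: mv_sup_def)
qed

lemma sup_comm: "x \<in> A \<Longrightarrow> y \<in> A \<Longrightarrow> x \<squnion> y = y \<squnion> x"
  unfolding mv_sup_def by (rule mv6)

lemma sup_ge2: "x \<in> A \<Longrightarrow> y \<in> A \<Longrightarrow> y \<preceq> x \<squnion> y"
  unfolding mv_sup_def by (metis comm le_p nA pA)

lemma sup_ge1: "x \<in> A \<Longrightarrow> y \<in> A \<Longrightarrow> x \<preceq> x \<squnion> y"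
  using sup_ge2 sup_comm by metis

lemma le_sup_eq: "y \<in> A \<Longrightarrow> t \<in> A \<Longrightarrow> y \<preceq> t \<Longrightarrow> y \<squnion> t = t"
  by (simp add: mv_sup_def mv_le_def)

lemma sup_least: assumes x: "x \<in> A" and y: "y \<in> A" and t: "t \<in> A"
  and xt: "x \<preceq> t" and yt: "y \<preceq> t" shows "x \<squnion> y \<preceq> t"
proof -
  have "n t \<preceq> n x" using n_anti xt x t by blast
  then have "p (n t) y \<preceq> p (n x) y" using p_mono x y t by simp
  then have "n (p (n x) y) \<preceq> n (p (n t) y)" using n_anti x y t by simp
  then have "x \<squnion> y \<preceq> t \<squnion> y" unfolding mv_sup_def using p_mono x y t by simp
  also have "t \<squnion> y = t" using sup_comm[OF t y] le_sup_eq[OF y t yt] by simp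
  finally show ?thesis .
qed

lemma sup_le_p: "x \<in> A \<Longrightarrow> y \<in> A \<Longrightarrow> x \<squnion> y \<preceq> p x y"
proof -
  assume x: "x \<in> A" and y: "y \<in> A"
  have "n (p (n x) y) = x \<otimes> n y" using x y by (simp add: mv_mult_def)
  then have "n (p (n x) y) \<preceq> x" using x y by simp
  then show ?thesis unfolding mv_sup_def using p_mono x y by simp
qed

lemma mul_sup: assumes x: "x \<in> A" and y: "y \<in> A" and w: "w \<in> A"
  shows "(x \<squnion> y) \<otimes> w \<preceq> (x \<otimes> w) \<squnion> (y \<otimes> w)"
proof -
  let ?s = "(x \<otimes> w) \<squnion> (y \<otimes> w)"
  have sA: "?s \<in> A" using x y w by simp
  have "x \<preceq> p (n w) ?s" using resid[OF x w sA] sup_ge1 x y w by simp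
  moreover have "y \<preceq> p (n w) ?s" using resid[OF y w sA] sup_ge2 x y w by simp
  ultimately have "x \<squnion> y \<preceq> p (n w) ?s" using sup_least x y w sA by simp
  then show ?thesis using resid x y w sA by simp
qed

lemma le_trans': "x \<preceq> y \<Longrightarrow> y \<preceq> w \<Longrightarrow> x \<in> A \<Longrightarrow> y \<in> A \<Longrightarrow> w \<in> A \<Longrightarrow> x \<preceq> w"
  using le_trans by blast

lemma sup_mul_ge: assumes x: "x \<in> A" and y: "y \<in> A" and w: "w \<in> A"
  shows "(x \<squnion> y) \<otimes> (x \<squnion> w) \<preceq> x \<squnion> (y \<otimes> w)"
proof -
  let ?r = "x \<squnion> (y \<otimes> w)"
  have rA: "?r \<in> A" using x y w by simp
  have xw: "x \<squnion> w \<in> A" using x w by simp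
  have "(x \<squnion> y) \<otimes> (x \<squnion> w) \<preceq> (x \<otimes> (x \<squnion> w)) \<squnion> (y \<otimes> (x \<squnion> w))"
    using mul_sup[OF x y xw] .
  moreover have A1: "x \<otimes> (x \<squnion> w) \<preceq> ?r"
    using le_trans'[OF mul_le[OF x xw] sup_ge1[OF x, of "y \<otimes> w"]] x y w by simp
  moreover have A2: "y \<otimes> (x \<squnion> w) \<preceq> ?r"
  proof -
    have e1: "y \<otimes> (x \<squnion> w) = (x \<squnion> w) \<otimes> y" using mul_comm x y w by simp
    have e2: "(x \<squnion> w) \<otimes> y \<preceq> (x \<otimes> y) \<squnion> (w \<otimes> y)" using mul_sup[OF x w y] .
    have e3: "x \<otimes> y \<preceq> ?r" using le_trans[OF _ _ _ mul_le[OF x y] sup_ge1[OF x, of "y \<otimes> w"]] x y w by simp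
    have e4: "w \<otimes> y \<preceq> ?r" using sup_ge2[OF x, of "y \<otimes> w"] mul_comm[OF w y] x y w by simp
    have e5: "(x \<otimes> y) \<squnion> (w \<otimes> y) \<preceq> ?r" using sup_least[OF _ _ rA e3 e4] x y w by simp
    show ?thesis using le_trans[OF _ _ rA e2 e5] e1 x y w by simp
  qed
  moreover have "(x \<otimes> (x \<squnion> w)) \<squnion> (y \<otimes> (x \<squnion> w)) \<preceq> ?r"
    using sup_least[OF _ _ rA A1 A2] x y w by simp
  ultimately show ?thesis using le_trans[of "(x \<squnion> y) \<otimes> (x \<squnion> w)" "(x \<otimes> (x \<squnion> w)) \<squnion> (y \<otimes> (x \<squnion> w))" ?r] x y w by simp
qed

lemma mvpowA[simp]: "x \<in> A \<Longrightarrow> mvpow p n z m x \<in> A" by (induct m) auto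

lemma one_le: "x \<in> A \<Longrightarrow> n z \<preceq> x \<Longrightarrow> x = n z"
  using le_antisym le_one by simp

lemma sup_one_pow: assumes a: "a \<in> A" and b: "b \<in> A" and ab: "a \<squnion> b = n z"
  shows "mvpow p n z m a \<squnion> b = n z"
proof (induct m)
  case 0 then show ?case using b sup_comm[OF oneA b] le_sup_eq[OF b oneA] by simp
next
  case (Suc m)
  let ?q = "mvpow p n z m a"
  have qA: "?q \<in> A" using a by simp
  have "(b \<squnion> a) \<otimes> (b \<squnion> ?q) \<preceq> b \<squnion> (a \<otimes> ?q)" by (rule sup_mul_ge[OF b a qA])
  moreover have "b \<squnion> a = n z" using ab sup_comm a b by simp
  moreover have "b \<squnion> ?q = n z" using Suc sup_comm b qA by simp
  ultimately have "n z \<preceq> b \<squnion> (a \<otimes> ?q)" by simp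
  then have "b \<squnion> (a \<otimes> ?q) = n z" using one_le a b qA by simp
  then show ?case using sup_comm a b qA by simp
qed

lemma sup_one_pow2: assumes a: "a \<in> A" and b: "b \<in> A" and ab: "a \<squnion> b = n z"
  shows "p (mvpow p n z m a) (mvpow p n z k b) = n z"
proof -
  have "mvpow p n z m a \<squnion> b = n z" by (rule sup_one_pow[OF a b ab])
  then have "b \<squnion> mvpow p n z m a = n z" using sup_comm a b by simp
  then have "mvpow p n z k b \<squnion> mvpow p n z m a = n z" using sup_one_pow[OF b mvpowA[OF a]] by simp
  then have "n z \<preceq> p (mvpow p n z k b) (mvpow p n z m a)" using sup_le_p a b by (metis mvpowA)
  then show ?thesis using one_le comm a b by simp
qed

end

context mvA begin

abbreviation filt where "filt F \<equiv> mv_filter A p n z F"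

lemma filtD: assumes "filt F"
  shows "F \<subseteq> A" "n z \<in> F" "\<And>x y. x \<in> F \<Longrightarrow> y \<in> F \<Longrightarrow> x \<otimes> y \<in> F"
    "\<And>x y. x \<in> F \<Longrightarrow> y \<in> A \<Longrightarrow> x \<preceq> y \<Longrightarrow> y \<in> F"
  using assms unfolding mv_filter_def by blast+

lemma filt_z: "filt F \<Longrightarrow> z \<in> F \<Longrightarrow> F = A"
  using filtD[of F] zero_le by blast

lemma maxD: assumes "F \<in> spec_M A p n z"
  shows "filt F" "z \<notin> F" "\<And>G. filt G \<Longrightarrow> F \<subseteq> G \<Longrightarrow> G \<noteq> A \<Longrightarrow> G = F"
  using assms filt_z unfolding spec_M_def by blast+

lemma mvpow_add: "x \<in> A \<Longrightarrow> mvpow p n z (a + b) x = mvpow p n z a x \<otimes> mvpow p n z b x"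
proof (induct a)
  case 0 then show ?case using mul_comm[of "n z" "mvpow p n z b x"] by simp
next
  case (Suc a) then show ?case by (simp add: mul_assoc)
qed

lemma mul_mono2: "x \<in> A \<Longrightarrow> y \<in> A \<Longrightarrow> x' \<in> A \<Longrightarrow> y' \<in> A \<Longrightarrow> x \<preceq> x' \<Longrightarrow> y \<preceq> y' \<Longrightarrow> x \<otimes> y \<preceq> x' \<otimes> y'"
proof -
  assume a: "x \<in> A" "y \<in> A" "x' \<in> A" "y' \<in> A" "x \<preceq> x'" "y \<preceq> y'"
  have "x \<otimes> y \<preceq> x' \<otimes> y" using mul_mono a by simp
  moreover have "x' \<otimes> y \<preceq> x' \<otimes> y'" using mul_mono[of y y' x'] a mul_comm by simp
  ultimately show ?thesis using le_trans a by (meson mulA)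
qed

lemma mul4: "a \<in> A \<Longrightarrow> b \<in> A \<Longrightarrow> c \<in> A \<Longrightarrow> d \<in> A \<Longrightarrow> (a \<otimes> b) \<otimes> (c \<otimes> d) = (a \<otimes> c) \<otimes> (b \<otimes> d)"
proof -
  assume a: "a \<in> A" "b \<in> A" "c \<in> A" "d \<in> A"
  have "(a \<otimes> b) \<otimes> (c \<otimes> d) = a \<otimes> ((b \<otimes> c) \<otimes> d)" using a by (simp add: mul_assoc)
  also have "\<dots> = a \<otimes> ((c \<otimes> b) \<otimes> d)" using a mul_comm[of b c] by simp
  also have "\<dots> = (a \<otimes> c) \<otimes> (b \<otimes> d)" using a by (simp add: mul_assoc)
  finally show ?thesis .
qed

lemma max_gen: assumes F: "F \<in> spec_M A p n z" and x: "x \<in> A" and xF: "x \<notin> F"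
  shows "\<exists>m. n (mvpow p n z m x) \<in> F"
proof -
  have fF: "filt F" and zF: "z \<notin> F" using maxD[OF F] by auto
  have FA: "F \<subseteq> A" using filtD(1)[OF fF] .
  define G where "G = {y \<in> A. \<exists>f\<in>F. \<exists>m. f \<otimes> mvpow p n z m x \<preceq> y}"
  have GA: "G \<subseteq> A" by (auto simp: G_def)
  have FG: "F \<subseteq> G"
  proof
    fix y assume "y \<in> F"
    then have "y \<in> A" "y \<otimes> mvpow p n z 0 x \<preceq> y" using FA by auto
    then show "y \<in> G" using \<open>y \<in> F\<close> unfolding G_def by blast
  qed
  have xG: "x \<in> G"
  proof -
    have "n z \<otimes> mvpow p n z 1 x = x" using x mul_comm[of "n z" x] by simp
    then have "n z \<otimes> mvpow p n z 1 x \<preceq> x" using x by simp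
    then show ?thesis using x filtD(2)[OF fF] unfolding G_def by blast
  qed
  have c1: "y1 \<otimes> y2 \<in> G" if y1: "y1 \<in> G" and y2: "y2 \<in> G" for y1 y2
  proof -
    obtain f1 m1 where f1: "f1 \<in> F" and l1: "f1 \<otimes> mvpow p n z m1 x \<preceq> y1" and y1A: "y1 \<in> A"
      using y1 unfolding G_def by blast
    obtain f2 m2 where f2: "f2 \<in> F" and l2: "f2 \<otimes> mvpow p n z m2 x \<preceq> y2" and y2A: "y2 \<in> A"
      using y2 unfolding G_def by blast
    have fA: "f1 \<in> A" "f2 \<in> A" using f1 f2 FA by auto
    have e: "(f1 \<otimes> f2) \<otimes> mvpow p n z (m1 + m2) x = (f1 \<otimes> mvpow p n z m1 x) \<otimes> (f2 \<otimes> mvpow p n z m2 x)"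
      using mul4[OF fA(1) fA(2) mvpowA[OF x] mvpowA[OF x], of m1 m2] mvpow_add[OF x, of m1 m2] by simp
    have "(f1 \<otimes> mvpow p n z m1 x) \<otimes> (f2 \<otimes> mvpow p n z m2 x) \<preceq> y1 \<otimes> y2"
      using mul_mono2[OF _ _ y1A y2A l1 l2] fA x by simp
    then have "(f1 \<otimes> f2) \<otimes> mvpow p n z (m1 + m2) x \<preceq> y1 \<otimes> y2" using e by simp
    moreover have "f1 \<otimes> f2 \<in> F" using filtD(3)[OF fF f1 f2] .
    moreover have "y1 \<otimes> y2 \<in> A" using y1A y2A by simp
    ultimately show ?thesis unfolding G_def by blast
  qed
  have c2: "y2 \<in> G" if y1: "y1 \<in> G" and y2: "y2 \<in> A" and le: "y1 \<preceq> y2" for y1 y2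
  proof -
    obtain f1 m1 where f: "f1 \<in> F" and l1: "f1 \<otimes> mvpow p n z m1 x \<preceq> y1" and yA: "y1 \<in> A"
      using y1 unfolding G_def by blast
    have "f1 \<otimes> mvpow p n z m1 x \<preceq> y2" using le_trans[OF _ yA y2 l1 le] f FA x by auto
    then show "y2 \<in> G" using f y2 unfolding G_def by blast
  qed
  have gG: "filt G"
    unfolding mv_filter_def using GA c1 c2 FG filtD(2)[OF fF] by blast
  have "G = A"
  proof (rule ccontr)
    assume "G \<noteq> A"
    then have "G = F" using maxD(3)[OF F gG FG] by simp
    then show False using xG xF by simp
  qed
  then have "z \<in> G" by simp
  then obtain f m where f: "f \<in> F" and l: "f \<otimes> mvpow p n z m x \<preceq> z" unfolding G_def by blast
  have fA: "f \<in> A" using f FA by auto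
  have "f \<preceq> p (n (mvpow p n z m x)) z" using resid[OF fA mvpowA[OF x] zA] l by simp
  then have "f \<preceq> n (mvpow p n z m x)" using x by simp
  then have "n (mvpow p n z m x) \<in> F" using filtD(4)[OF fF f] x by simp
  then show ?thesis by blast
qed

lemma max_lin: assumes F: "F \<in> spec_M A p n z" and x: "x \<in> A" and y: "y \<in> A"
  shows "p (n x) y \<in> F \<or> p (n y) x \<in> F"
proof (rule ccontr)
  assume "\<not> ?thesis"
  then have a: "p (n x) y \<notin> F" and b: "p (n y) x \<notin> F" by auto
  have fF: "filt F" and zF: "z \<notin> F" using maxD[OF F] by auto
  obtain m where m: "n (mvpow p n z m (p (n x) y)) \<in> F" using max_gen[OF F _ a] x y by auto
  obtain k where k: "n (mvpow p n z k (p (n y) x)) \<in> F" using max_gen[OF F _ b] x y by auto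
  have "n (mvpow p n z m (p (n x) y)) \<otimes> n (mvpow p n z k (p (n y) x)) \<in> F"
    using filtD(3)[OF fF m k] .
  moreover have "p (mvpow p n z m (p (n x) y)) (mvpow p n z k (p (n y) x)) = n z"
    using sup_one_pow2 prelin x y by simp
  ultimately have "z \<in> F" using x y by (simp add: mv_mult_def)
  then show False using zF by simp
qed

end


definition Lset :: "('a \<Rightarrow> 'a \<Rightarrow> 'a) \<Rightarrow> ('a \<Rightarrow> 'a) \<Rightarrow> (rat \<Rightarrow> 'a) \<Rightarrow> 'a set \<Rightarrow> 'a \<Rightarrow> rat set" where
  "Lset p n c F x = {q. 0 \<le> q \<and> q \<le> 1 \<and> p (n (c q)) x \<in> F}"

definition homF :: "('a \<Rightarrow> 'a \<Rightarrow> 'a) \<Rightarrow> ('a \<Rightarrow> 'a) \<Rightarrow> (rat \<Rightarrow> 'a) \<Rightarrow> 'a set \<Rightarrow> 'a \<Rightarrow> real" where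
  "homF p n c F x = Sup ((of_rat :: rat \<Rightarrow> real) ` Lset p n c F x)"

locale pav = mvA +
  fixes c :: "rat \<Rightarrow> 'a"
  assumes pav: "pavelka A p n c" and zc: "z = c 0"
begin

lemma cA[simp]: "0 \<le> r \<Longrightarrow> r \<le> 1 \<Longrightarrow> c r \<in> A"
  and c_add: "0 \<le> r \<Longrightarrow> r \<le> 1 \<Longrightarrow> 0 \<le> s \<Longrightarrow> s \<le> 1 \<Longrightarrow> p (c r) (c s) = c (min (r + s) 1)"
  and c_neg: "0 \<le> r \<Longrightarrow> r \<le> 1 \<Longrightarrow> n (c r) = c (1 - r)"
  using pav unfolding pavelka_def by blast+

lemma c1: "n z = c 1" using c_neg[of 0] zc by simp
lemma c0n: "n (c 1) = z" using c_neg[of 1] zc by simp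
lemma c0: "c 0 = z" using zc by simp

lemma c_mul: "0 \<le> r \<Longrightarrow> r \<le> 1 \<Longrightarrow> 0 \<le> s \<Longrightarrow> s \<le> 1 \<Longrightarrow> c r \<otimes> c s = c (max 0 (r + s - 1))"
proof -
  assume a: "0 \<le> r" "r \<le> 1" "0 \<le> s" "s \<le> 1"
  have "c r \<otimes> c s = n (p (c (1 - r)) (c (1 - s)))" using a by (simp add: mv_mult_def c_neg)
  also have "\<dots> = n (c (min (1 - r + (1 - s)) 1))" using a c_add[of "1-r" "1-s"] by simp
  also have "\<dots> = c (1 - min (1 - r + (1 - s)) 1)" using a by (simp add: c_neg)
  also have "1 - min (1 - r + (1 - s)) 1 = max 0 (r + s - 1)" by (simp add: min_def max_def)
  finally show ?thesis .
qed

lemma c_imp: "0 \<le> r \<Longrightarrow> r \<le> 1 \<Longrightarrow> 0 \<le> s \<Longrightarrow> s \<le> 1 \<Longrightarrow> p (n (c r)) (c s) = c (min (1 - r + s) 1)"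
  by (simp add: c_neg c_add)

lemma c_pow: "0 \<le> s \<Longrightarrow> s \<le> 1 \<Longrightarrow> mvpow p n z m (c s) = c (max 0 (1 - of_nat m * (1 - s)))"
proof (induct m)
  case 0 then show ?case by (simp add: c1)
next
  case (Suc m)
  have "mvpow p n z (Suc m) (c s) = c s \<otimes> c (max 0 (1 - of_nat m * (1 - s)))" using Suc by simp
  also have "\<dots> = c (max 0 (s + max 0 (1 - of_nat m * (1 - s)) - 1))"
    using Suc by (intro c_mul) (auto simp: max_def mult_nonneg_nonneg)
  also have "max 0 (s + max 0 (1 - of_nat m * (1 - s)) - 1) = max 0 (1 - of_nat (Suc m) * (1 - s))"
    using Suc by (auto simp: max_def algebra_simps)
  finally show ?case .
qed

lemma mvpow_F: "filt F \<Longrightarrow> x \<in> F \<Longrightarrow> mvpow p n z m x \<in> F"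
  by (induct m) (auto dest: filtD)

lemma c_inF: assumes F: "F \<in> spec_M A p n z" and s: "0 \<le> s" "s \<le> 1" and cs: "c s \<in> F"
  shows "s = 1"
proof (rule ccontr)
  assume "s \<noteq> 1"
  then have s1: "0 < 1 - s" using s by simp
  obtain m :: nat where m: "1 / (1 - s) < of_nat m" using reals_Archimedean2 by blast
  then have "1 < of_nat m * (1 - s)" using s1 by (simp add: field_simps)
  then have "max 0 (1 - of_nat m * (1 - s)) = 0" by simp
  then have "mvpow p n z m (c s) = z" using c_pow[OF s] c0 by simp
  moreover have "mvpow p n z m (c s) \<in> F" using mvpow_F maxD(1)[OF F] cs by blast
  ultimately show False using maxD(2)[OF F] by simp
qed

lemma imp_trans: assumes a: "a \<in> A" and b: "b \<in> A" and d: "d \<in> A"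
  shows "p (n a) b \<otimes> p (n b) d \<preceq> p (n a) d"
proof -
  let ?X = "p (n a) b" and ?Y = "p (n b) d"
  have XA: "?X \<in> A" and YA: "?Y \<in> A" using a b d by auto
  have X: "?X \<otimes> a \<preceq> b" using resid[of ?X a b] a b by simp
  have S1: "(?X \<otimes> ?Y) \<otimes> a = ?Y \<otimes> (?X \<otimes> a)"
    using a XA YA by (metis mul_assoc mul_comm)
  have "(?X \<otimes> a) \<otimes> ?Y \<preceq> b \<otimes> ?Y" using mul_mono[OF _ b YA X] XA a by simp
  then have S2: "?Y \<otimes> (?X \<otimes> a) \<preceq> ?Y \<otimes> b" using mul_comm XA YA a b by simp
  have S3: "?Y \<otimes> b \<preceq> d" using resid[of ?Y b d] b d YA by simp
  have "(?X \<otimes> ?Y) \<otimes> a \<preceq> d" using S1 le_trans[OF _ _ d S2 S3] XA YA a b by simp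
  then show ?thesis using resid[of "?X \<otimes> ?Y" a d] XA YA a d by simp
qed

lemma mulp: assumes x: "x \<in> A" and y: "y \<in> A" and w: "w \<in> A"
  shows "x \<otimes> p y w \<preceq> p (x \<otimes> y) w"
proof -
  have a1: "p y w \<otimes> n w \<preceq> y" using resid2[of "p y w" y w] y w by simp
  have "(p y w \<otimes> n w) \<otimes> x \<preceq> y \<otimes> x" using mul_mono[OF _ y x a1] y w by simp
  then have "(x \<otimes> p y w) \<otimes> n w \<preceq> x \<otimes> y" using x y w by (metis mul_assoc mul_comm nA pA)
  then show ?thesis using resid2[of "x \<otimes> p y w" "x \<otimes> y" w] x y w by simp
qed

lemma imp_add: assumes a: "a \<in> A" and b: "b \<in> A" and c: "e \<in> A" and d: "d \<in> A"
  shows "p (n a) b \<otimes> p (n e) d \<preceq> p (n (p a e)) (p b d)"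
proof -
  let ?X = "p (n a) b" and ?Y = "p (n e) d"
  have XA: "?X \<in> A" and YA: "?Y \<in> A" using a b c d by auto
  have X: "?X \<otimes> a \<preceq> b" using resid[of ?X a b] a b by simp
  have Y: "?Y \<otimes> e \<preceq> d" using resid[of ?Y e d] c d by simp
  have s1: "?X \<otimes> p a e \<preceq> p (?X \<otimes> a) e" using mulp XA a c by simp
  have s2: "p (?X \<otimes> a) e \<preceq> p b e" using p_mono[OF _ b c X] XA a by simp
  have s3: "?X \<otimes> p a e \<preceq> p b e" using le_trans[OF _ _ _ s1 s2] XA a b c by simp
  have s4: "?Y \<otimes> (?X \<otimes> p a e) \<preceq> ?Y \<otimes> p b e"
    using mul_mono[OF _ _ YA s3] mul_comm XA YA a b c by simp
  have s5: "?Y \<otimes> p b e = ?Y \<otimes> p e b" using comm b c by simp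
  have s6: "?Y \<otimes> p e b \<preceq> p (?Y \<otimes> e) b" using mulp YA b c by simp
  have s7: "p (?Y \<otimes> e) b \<preceq> p d b" using p_mono[OF _ d b Y] YA c by simp
  have s8: "(?X \<otimes> ?Y) \<otimes> p a e = ?Y \<otimes> (?X \<otimes> p a e)"
    using XA YA a c by (metis mul_assoc mul_comm pA)
  have "(?X \<otimes> ?Y) \<otimes> p a e \<preceq> p d b"
    using s8 s4 s5 s6 s7 le_trans XA YA a b c d by (metis mulA pA)
  then have "(?X \<otimes> ?Y) \<otimes> p a e \<preceq> p b d" using comm b d by simp
  then show ?thesis using resid[of "?X \<otimes> ?Y" "p a e" "p b d"] XA YA a b c d by simp
qed

end

locale maxF = pav +
  fixes F assumes F: "F \<in> spec_M A p n z"
begin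

abbreviation "L \<equiv> Lset p n c F"
abbreviation "h \<equiv> homF p n c F"

lemma fF: "filt F" and zF: "z \<notin> F" using maxD[OF F] by auto
lemma FA: "F \<subseteq> A" using filtD(1)[OF fF] .
lemma F1: "n z \<in> F" using filtD(2)[OF fF] .
lemma Fmul: "x \<in> F \<Longrightarrow> y \<in> F \<Longrightarrow> x \<otimes> y \<in> F" using filtD(3)[OF fF] .
lemma Fup: "x \<in> F \<Longrightarrow> y \<in> A \<Longrightarrow> x \<preceq> y \<Longrightarrow> y \<in> F" using filtD(4)[OF fF] .

lemma T: assumes q: "0 \<le> q" "q \<le> 1" and s: "0 \<le> s" "s \<le> 1" and x: "x \<in> A"
  and h1: "p (n (c q)) x \<in> F" and h2: "p (n x) (c s) \<in> F" shows "q \<le> s"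
proof -
  have "p (n (c q)) x \<otimes> p (n x) (c s) \<in> F" using Fmul h1 h2 by simp
  then have "p (n (c q)) (c s) \<in> F" using Fup imp_trans[of "c q" x "c s"] q s x by simp
  then have "c (min (1 - q + s) 1) \<in> F" using c_imp q s by simp
  then have "min (1 - q + s) 1 = 1" using c_inF[OF F, of "min (1 - q + s) 1"] q s by simp
  then show ?thesis by (simp add: min_def split: if_splits)
qed

lemma Lin: "0 \<le> q \<Longrightarrow> q \<le> 1 \<Longrightarrow> x \<in> A \<Longrightarrow> p (n (c q)) x \<in> F \<or> p (n x) (c q) \<in> F"
  using max_lin[OF F] by simp

lemma Down: assumes q: "q' \<le> q" "0 \<le> q'" "q \<le> 1" and x: "x \<in> A" and qL: "q \<in> L x"
  shows "q' \<in> L x"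
proof -
  have "p (n (n (c q))) (n (c q')) = p (c q) (c (1 - q'))" using q by (simp add: c_neg)
  also have "\<dots> = n z" using q c_add[of q "1 - q'"] c1 by (simp add: min_def)
  finally have "n (c q) \<preceq> n (c q')" by (simp add: mv_le_def)
  then have "p (n (c q)) x \<preceq> p (n (c q')) x" using p_mono q x by simp
  then show ?thesis using Fup qL q x unfolding Lset_def by auto
qed

end

context maxF begin

lemma L0: "x \<in> A \<Longrightarrow> 0 \<in> L x"
  unfolding Lset_def using F1 c0 by simp

lemma Lsub: "q \<in> L x \<Longrightarrow> 0 \<le> q \<and> q \<le> 1" unfolding Lset_def by auto

lemma bddL: "bdd_above ((of_rat :: rat \<Rightarrow> real) ` L x)"
  unfolding bdd_above_def using Lsub by (intro exI[of _ 1]) (auto simp: of_rat_less_eq[where 'a=real, of _ 1, simplified])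

lemma Hge: "q \<in> L x \<Longrightarrow> of_rat q \<le> h x"
  unfolding homF_def using bddL by (intro cSup_upper) auto

lemma Hle: assumes x: "x \<in> A" and s: "0 \<le> s" "s \<le> 1" and h2: "p (n x) (c s) \<in> F"
  shows "h x \<le> of_rat s"
  unfolding homF_def
proof (rule cSup_least)
  show "(of_rat :: rat \<Rightarrow> real) ` L x \<noteq> {}" using L0[OF x] by auto
  fix r assume "r \<in> (of_rat :: rat \<Rightarrow> real) ` L x"
  then obtain q where q: "q \<in> L x" "r = of_rat q" by auto
  then have "q \<le> s" using T[OF _ _ s x _ h2] unfolding Lset_def by auto
  then show "r \<le> of_rat s" using q by (simp add: of_rat_less_eq)
qed

lemma h0: "x \<in> A \<Longrightarrow> 0 \<le> h x" using Hge[OF L0] by simp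

lemma h1: assumes x: "x \<in> A" shows "h x \<le> 1"
proof -
  have "p (n x) (n z) \<in> F" using F1 x by simp
  then have "p (n x) (c 1) \<in> F" using c1 by simp
  then show ?thesis using Hle[of x 1] x by simp
qed

lemma Hlt: assumes x: "x \<in> A" and q: "0 \<le> q" and lt: "of_rat q < h x" shows "q \<in> L x"
proof -
  have "(of_rat q :: real) < 1" using lt h1[OF x] by linarith
  then have q1: "q \<le> 1" by simp
  show ?thesis
  proof (rule ccontr)
    assume "q \<notin> L x"
    then have "p (n x) (c q) \<in> F" using Lin[OF q q1 x] unfolding Lset_def using q q1 by auto
    then have "h x \<le> of_rat q" using Hle[OF x q q1] by simp
    then show False using lt by simp
  qed
qed

lemma Hgt: assumes x: "x \<in> A" and s: "s \<le> 1" and gt: "h x < of_rat s" shows "p (n x) (c s) \<in> F"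
proof -
  have "0 < (of_rat s :: real)" using gt h0[OF x] by linarith
  then have s0: "0 \<le> s" by simp
  show ?thesis
  proof (rule ccontr)
    assume "p (n x) (c s) \<notin> F"
    then have "s \<in> L x" using Lin[OF s0 s x] unfolding Lset_def using s0 s by auto
    then have "of_rat s \<le> h x" by (rule Hge)
    then show False using gt by simp
  qed
qed

lemma approx_below: assumes x: "x \<in> A" and d: "0 < d" shows "\<exists>q\<in>L x. h x - d < of_rat q"
proof (cases "h x - d < 0")
  case True then show ?thesis using L0[OF x] by force
next
  case False
  obtain q where q: "h x - d < of_rat q" "of_rat q < h x" using of_rat_dense[of "h x - d" "h x"] d by auto
  have "0 < (of_rat q :: real)" using q False by linarith
  then have "0 \<le> q" by simp
  then show ?thesis using Hlt[OF x _ q(2)] q by blast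
qed

lemma approx_above: assumes x: "x \<in> A" and t: "h x < t" "t \<le> 1"
  shows "\<exists>s. h x < of_rat s \<and> of_rat s < t \<and> 0 \<le> s \<and> s \<le> 1 \<and> p (n x) (c s) \<in> F"
proof -
  obtain s where s: "h x < of_rat s" "of_rat s < t" using of_rat_dense t by blast
  have "(of_rat s :: real) < 1" "0 < (of_rat s :: real)" using s t h0[OF x] by linarith+
  then have s1: "s \<le> 1" and s0: "0 \<le> s" by simp_all
  show ?thesis using s s0 s1 Hgt[OF x s1 s(1)] by blast
qed

end

context maxF begin

lemma h_neg: assumes x: "x \<in> A" shows "h (n x) = 1 - h x"
proof (rule antisym)
  show "h (n x) \<le> 1 - h x"
  proof (rule ccontr)
    assume "\<not> ?thesis"
    then obtain q where q: "1 - h x < of_rat q" "of_rat q < h (n x)" using of_rat_dense by (meson not_le)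
    have "0 < (of_rat q :: real)" using q h1[OF x] by linarith
    then have q0: "0 \<le> q" by simp
    have qL: "q \<in> L (n x)" using Hlt[OF _ q0 q(2)] x by simp
    then have q1: "q \<le> 1" using Lsub by blast
    have "p (n (c q)) (n x) \<in> F" using qL unfolding Lset_def by simp
    then have "p (n x) (c (1 - q)) \<in> F" using c_neg[OF q0 q1] comm x q0 q1 by simp
    then have "h x \<le> of_rat (1 - q)" using Hle[OF x] q0 q1 by simp
    then show False using q by (simp add: of_rat_diff)
  qed
next
  show "1 - h x \<le> h (n x)"
  proof (rule ccontr)
    assume "\<not> ?thesis"
    then obtain q where q: "h (n x) < of_rat q" "of_rat q < 1 - h x" using of_rat_dense by (meson not_le)
    have hx0: "0 \<le> h x" "0 \<le> h (n x)" using h0 x by auto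
    have "0 < (of_rat q :: real)" "(of_rat q :: real) < 1" using q hx0 by linarith+
    then have q0: "0 \<le> q" and q1: "q \<le> 1" by simp_all
    have "p (n (n x)) (c q) \<in> F" using Hgt[OF _ q1 q(1)] x by simp
    then have "p (n (c (1 - q))) x \<in> F" using c_neg[of "1 - q"] comm x q0 q1 by simp
    then have "1 - q \<in> L x" using q0 q1 unfolding Lset_def by simp
    then have "of_rat (1 - q) \<le> h x" by (rule Hge)
    then show False using q by (simp add: of_rat_diff)
  qed
qed

lemma h_add: assumes x: "x \<in> A" and y: "y \<in> A" shows "h (p x y) = min (h x + h y) 1"
proof (rule antisym)
  show "min (h x + h y) 1 \<le> h (p x y)"
  proof (rule ccontr)
    assume "\<not> ?thesis"
    then obtain q where q: "h (p x y) < of_rat q" "of_rat q < min (h x + h y) 1" using of_rat_dense by (meson not_le)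
    define d where "d = (h x + h y - of_rat q) / 2"
    have d: "0 < d" using q by (simp add: d_def)
    obtain q1 where q1: "q1 \<in> L x" "h x - d < of_rat q1" using approx_below[OF x d] by blast
    obtain q2 where q2: "q2 \<in> L y" "h y - d < of_rat q2" using approx_below[OF y d] by blast
    have r1: "0 \<le> q1" "q1 \<le> 1" and r2: "0 \<le> q2" "q2 \<le> 1" using q1 q2 Lsub by auto
    have "0 \<le> h (p x y)" using h0[of "p x y"] x y by simp
    then have "0 < (of_rat q :: real)" using q by linarith
    then have q0: "0 \<le> q" by simp
    have qlt: "(of_rat q :: real) < h x + h y" using q(2) by simp
    have d2: "2 * d = h x + h y - of_rat q" by (simp add: d_def)
    have "(of_rat q :: real) < of_rat q1 + of_rat q2" using qlt q1(2) q2(2) d2 by linarith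
    then have "(of_rat q :: real) < of_rat (q1 + q2)" by (simp add: of_rat_add)
    then have qq: "q < q1 + q2" by (simp add: of_rat_less)
    have "(of_rat q :: real) < 1" using q by simp
    then have qle1: "q \<le> 1" by simp
    have "p (n (c q1)) x \<otimes> p (n (c q2)) y \<in> F" using Fmul q1 q2 unfolding Lset_def by auto
    then have "p (n (p (c q1) (c q2))) (p x y) \<in> F"
      using Fup imp_add[of "c q1" x "c q2" y] r1 r2 x y by simp
    then have "p (n (c (min (q1 + q2) 1))) (p x y) \<in> F" using c_add r1 r2 by simp
    then have "min (q1 + q2) 1 \<in> L (p x y)" using r1 r2 unfolding Lset_def by simp
    then have "q \<in> L (p x y)" using Down[of q "min (q1 + q2) 1" "p x y"] q0 qq qle1 r1 r2 x y by simp
    then have "of_rat q \<le> h (p x y)" by (rule Hge)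
    then show False using q by simp
  qed
next
  show "h (p x y) \<le> min (h x + h y) 1"
  proof (rule ccontr)
    assume a: "\<not> ?thesis"
    have hp1: "h (p x y) \<le> 1" using h1 x y by simp
    then have lt: "h x + h y < h (p x y)" using a by linarith
    define d where "d = (h (p x y) - h x - h y) / 3"
    have d: "0 < d" using lt by (simp add: d_def)
    have d3: "3 * d = h (p x y) - h x - h y" by (simp add: d_def)
    have hxd: "h x + d \<le> 1" "h y + d \<le> 1" using hp1 h0[OF x] h0[OF y] lt d3 by linarith+
    obtain s1 where s1: "h x < of_rat s1" "of_rat s1 < h x + d" "0 \<le> s1" "s1 \<le> 1" "p (n x) (c s1) \<in> F"
      using approx_above[OF x, of "h x + d"] d hxd by auto
    obtain s2 where s2: "h y < of_rat s2" "of_rat s2 < h y + d" "0 \<le> s2" "s2 \<le> 1" "p (n y) (c s2) \<in> F"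
      using approx_above[OF y, of "h y + d"] d hxd by auto
    have "(of_rat s1 + of_rat s2 :: real) < h (p x y)" using s1(2) s2(2) d3 d by linarith
    then have "(of_rat (s1 + s2) :: real) < h (p x y)" by (simp add: of_rat_add)
    then have ss: "(of_rat (s1 + s2) :: real) < 1" using hp1 by linarith
    then have ss1: "s1 + s2 \<le> 1" by simp
    have "p (n x) (c s1) \<otimes> p (n y) (c s2) \<in> F" using Fmul s1 s2 by simp
    then have "p (n (p x y)) (p (c s1) (c s2)) \<in> F"
      using Fup imp_add[of x "c s1" y "c s2"] s1 s2 x y by simp
    then have "p (n (p x y)) (c (s1 + s2)) \<in> F" using c_add s1 s2 ss1 by simp
    then have "h (p x y) \<le> of_rat (s1 + s2)" using Hle[of "p x y" "s1 + s2"] x y s1 s2 ss1 by simp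
    then show False using \<open>(of_rat (s1 + s2) :: real) < h (p x y)\<close> by simp
  qed
qed

lemma h_z: "h z = 0"
proof (rule antisym)
  show "h z \<le> 0"
  proof (rule ccontr)
    assume "\<not> ?thesis"
    then obtain q where q: "0 < (of_rat q :: real)" "of_rat q < h z" using of_rat_dense by (meson not_le)
    have q0: "0 \<le> q" "0 < q" using q by simp_all
    have qL: "q \<in> L z" using Hlt[OF zA q0(1) q(2)] .
    then have q1: "q \<le> 1" using Lsub by blast
    have "n (c q) \<in> F" using qL q0 q1 unfolding Lset_def by simp
    then have "c (1 - q) \<in> F" using c_neg q0 q1 by simp
    then have "1 - q = 1" using c_inF[OF F, of "1 - q"] q0 q1 by simp
    then show False using q0 by (simp add: min_def split: if_splits)
  qed
qed (simp add: h0)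

lemma h_mul: assumes x: "x \<in> A" and y: "y \<in> A" shows "h (x \<otimes> y) = max 0 (h x + h y - 1)"
  using x y by (simp add: mv_mult_def h_neg h_add min_def max_def)

lemma h_pow: assumes y: "y \<in> A" and hy: "h y = 1" shows "h (mvpow p n z m y) = 1"
proof (induct m)
  case 0 then show ?case using h_neg[OF zA] h_z by simp
next
  case (Suc m) then show ?case using h_mul y hy by simp
qed

lemma kernel1: assumes y: "y \<in> A" and yF: "y \<in> F" shows "h y = 1"
proof -
  have "p (n (c 1)) y = y" using c0n y by simp
  then have "1 \<in> L y" using yF unfolding Lset_def by simp
  then show "h y = 1" using Hge h1[OF y] by force
qed

lemma kernel: assumes y: "y \<in> A" shows "h y = 1 \<longleftrightarrow> y \<in> F"
proof
  assume hy: "h y = 1"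
  show "y \<in> F"
  proof (rule ccontr)
    assume "y \<notin> F"
    then obtain m where m: "n (mvpow p n z m y) \<in> F" using max_gen[OF F y] by blast
    have "h (n (mvpow p n z m y)) = 1" using kernel1[OF _ m] y by simp
    then show False using h_neg[of "mvpow p n z m y"] h_pow[OF y hy, of m] y by simp
  qed
qed (use kernel1 y in auto)

end

context pav begin

lemma hom_F: assumes F: "F \<in> spec_M A p n z"
  shows "mv_hom_unit A p n z (homF p n c F)" "{y \<in> A. homF p n c F y = 1} = F"
proof -
  interpret maxF A p n z c F using F by unfold_locales
  show "mv_hom_unit A p n z (homF p n c F)"
    unfolding mv_hom_unit_def using h0 h1 h_z h_add h_neg by auto
  show "{y \<in> A. homF p n c F y = 1} = F" using kernel FA by auto
qed

lemma hom_frac: assumes g: "mv_hom_unit A p n z g" and m: "0 < m" and k: "k \<le> m"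
  shows "g (c (of_nat k / of_nat m)) = of_nat k / of_nat m"
proof -
  have gz: "g z = 0" and gadd: "\<And>x y. x \<in> A \<Longrightarrow> y \<in> A \<Longrightarrow> g (p x y) = min (g x + g y) 1"
    and gneg: "\<And>x. x \<in> A \<Longrightarrow> g (n x) = 1 - g x" and g01: "\<And>x. x \<in> A \<Longrightarrow> 0 \<le> g x \<and> g x \<le> 1"
    using g unfolding mv_hom_unit_def by auto
  define t where "t = g (c (1 / of_nat m))"
  have m1: "(1::rat) / of_nat m \<le> 1" "0 \<le> (1::rat) / of_nat m" using m by (auto simp: field_simps)
  have t0: "0 \<le> t" using g01 m1 unfolding t_def by simp
  have step: "j \<le> m \<Longrightarrow> g (c (of_nat j / of_nat m)) = min (of_nat j * t) 1" for j
  proof (induct j)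
    case 0 then show ?case using gz c0 by simp
  next
    case (Suc j)
    have jm: "(of_nat j :: rat) / of_nat m \<le> 1" "0 \<le> (of_nat j :: rat) / of_nat m"
      using Suc m by (auto simp: field_simps)
    have "(of_nat j :: rat) / of_nat m + 1 / of_nat m = of_nat (Suc j) / of_nat m"
      by (simp add: add_divide_distrib)
    moreover have "(of_nat (Suc j) :: rat) / of_nat m \<le> 1" using Suc m by (simp add: field_simps)
    ultimately have "c (of_nat (Suc j) / of_nat m) = p (c (of_nat j / of_nat m)) (c (1 / of_nat m))"
      using c_add[OF jm(2) jm(1) m1(2) m1(1)] by (simp add: min_def)
    then have "g (c (of_nat (Suc j) / of_nat m)) = min (min (of_nat j * t) 1 + t) 1"
      using gadd jm m1 Suc t_def by simp
    also have "\<dots> = min (of_nat (Suc j) * t) 1" using t0 by (auto simp: min_def algebra_simps)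
    finally show ?case .
  qed
  have "g (c 1) = 1" using gneg[of z] gz c1 by simp
  then have "min (of_nat m * t) 1 = 1" using step[of m] m by simp
  then have mt: "1 \<le> of_nat m * t" by (simp add: min_def split: if_splits)
  have t_eq: "t = 1 / of_nat m"
  proof -
    have "(1::rat) - 1 / of_nat m = of_nat (m - 1) / of_nat m" using m by (simp add: field_simps of_nat_diff)
    then have "n (c (1 / of_nat m)) = c (of_nat (m - 1) / of_nat m)" using c_neg m1 by simp
    then have "1 - t = min (of_nat (m - 1) * t) 1" using gneg[of "c (1 / of_nat m)"] step[of "m - 1"] m1 t_def by simp
    moreover have "of_nat (m - 1) * t < 1"
    proof (rule ccontr)
      assume "\<not> ?thesis"
      then have "min (of_nat (m - 1) * t) 1 = (1::real)" by (intro min_absorb2) (simp only: not_less)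
      then have "1 - t = 1" using \<open>1 - t = _\<close> by argo
      then show False using mt by simp
    qed
    ultimately have "1 - t = of_nat (m - 1) * t" by simp
    then have "of_nat m * t = 1" using m by (simp add: of_nat_diff algebra_simps)
    then show ?thesis using m by (simp add: field_simps)
  qed
  have "g (c (of_nat k / of_nat m)) = min (of_nat k * (1 / of_nat m)) 1" using step[OF k] t_eq by simp
  also have "\<dots> = of_nat k / of_nat m" using k m by (simp add: min_def field_simps)
  finally show ?thesis by simp
qed

lemma hom_const: assumes g: "mv_hom_unit A p n z g" and q: "0 \<le> q" "q \<le> 1"
  shows "g (c q) = of_rat q"
proof -
  obtain a b where ab: "quotient_of q = (a, b)" by (cases "quotient_of q") auto
  have b0: "0 < b" using quotient_of_denom_pos[OF ab] .
  have qab: "q = of_int a / of_int b" using quotient_of_div[OF ab] .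
  have a0: "0 \<le> a" using q b0 qab by (simp add: zero_le_divide_iff)
  have ab1: "a \<le> b" using q b0 qab by (simp add: divide_le_eq_1)
  define k where "k = nat a"
  define m where "m = nat b"
  have qkm: "q = of_nat k / of_nat m" using qab a0 b0 by (simp add: k_def m_def)
  have "g (c q) = of_nat k / of_nat m" using hom_frac[OF g, of m k] qkm b0 ab1 by (simp add: k_def m_def)
  also have "\<dots> = of_rat q" by (simp add: qkm of_rat_divide)
  finally show ?thesis .
qed

end

context pav begin

lemma hom_unique: assumes F: "F \<in> spec_M A p n z" and g: "mv_hom_unit A p n z g"
  and gk: "{y \<in> A. g y = 1} = F" and x: "x \<in> A"
  shows "g x = homF p n c F x"
proof -
  interpret maxF A p n z c F using F by unfold_locales
  have gadd: "\<And>x y. x \<in> A \<Longrightarrow> y \<in> A \<Longrightarrow> g (p x y) = min (g x + g y) 1"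
    and gneg: "\<And>x. x \<in> A \<Longrightarrow> g (n x) = 1 - g x" and g01: "\<And>x. x \<in> A \<Longrightarrow> 0 \<le> g x \<and> g x \<le> 1"
    using g unfolding mv_hom_unit_def by auto
  have key: "q \<in> L x \<longleftrightarrow> of_rat q \<le> g x" if q: "0 \<le> q" "q \<le> 1" for q
  proof -
    have "g (p (n (c q)) x) = min (1 - of_rat q + g x) 1"
      using gadd gneg hom_const[OF g q] q x by simp
    then have "p (n (c q)) x \<in> F \<longleftrightarrow> min (1 - of_rat q + g x) 1 = 1" using gk q x by auto
    also have "\<dots> \<longleftrightarrow> of_rat q \<le> g x" by (auto simp: min_def)
    finally show ?thesis using q unfolding Lset_def by simp
  qed
  show ?thesis
  proof (rule antisym)
    show "g x \<le> h x"
    proof (rule ccontr)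
      assume "\<not> ?thesis"
      then obtain q where q: "h x < (of_rat q :: real)" "of_rat q < g x" using of_rat_dense by (meson not_le)
      have "0 < (of_rat q :: real)" "(of_rat q :: real) < 1" using q h0[OF x] g01[OF x] by linarith+
      then have q01: "0 \<le> q" "q \<le> 1" by simp_all
      then have "q \<in> L x" using key q by simp
      then show False using Hge q by force
    qed
  next
    show "h x \<le> g x"
    proof (rule ccontr)
      assume "\<not> ?thesis"
      then obtain q where q: "g x < (of_rat q :: real)" "of_rat q < h x" using of_rat_dense by (meson not_le)
      have "0 < (of_rat q :: real)" "(of_rat q :: real) < 1" using q h1[OF x] g01[OF x] by linarith+
      then have q01: "0 \<le> q" "q \<le> 1" by simp_all
      have "q \<in> L x" using Hlt[OF x q01(1) q(2)] .
      then have "of_rat q \<le> g x" using key q01 by simp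
      then show False using q by simp
    qed
  qed
qed

lemma quot_val_eq: assumes F: "F \<in> spec_M A p n z" and x: "x \<in> A"
  shows "quot_val A p n z F x = homF p n c F x"
  unfolding quot_val_def
proof (rule the_equality)
  show "\<exists>g. mv_hom_unit A p n z g \<and> {y \<in> A. g y = 1} = F \<and> g x = homF p n c F x"
    using hom_F[OF F] by blast
next
  fix r assume "\<exists>g. mv_hom_unit A p n z g \<and> {y \<in> A. g y = 1} = F \<and> g x = r"
  then obtain g where "mv_hom_unit A p n z g" "{y \<in> A. g y = 1} = F" "g x = r" by blast
  then show "r = homF p n c F x" using hom_unique[OF F _ _ x] by simp
qed

lemma zorn_max: assumes fP: "filt P" and zP: "z \<notin> P"
  shows "\<exists>G\<in>spec_M A p n z. P \<subseteq> G"
proof -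
  define S where "S = {G. filt G \<and> z \<notin> G \<and> P \<subseteq> G}"
  have "\<forall>C\<in>chains S. \<exists>U\<in>S. \<forall>X\<in>C. X \<subseteq> U"
  proof
    fix C assume C: "C \<in> chains S"
    show "\<exists>U\<in>S. \<forall>X\<in>C. X \<subseteq> U"
    proof (cases "C = {}")
      case True then show ?thesis using fP zP unfolding S_def by auto
    next
      case False
      have CS: "C \<subseteq> S" and ch: "\<And>X Y. X \<in> C \<Longrightarrow> Y \<in> C \<Longrightarrow> X \<subseteq> Y \<or> Y \<subseteq> X"
        using C unfolding chains_def chain_subset_def by auto
      have fX: "\<And>X. X \<in> C \<Longrightarrow> filt X" and zX: "\<And>X. X \<in> C \<Longrightarrow> z \<notin> X" and PX: "\<And>X. X \<in> C \<Longrightarrow> P \<subseteq> X"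
        using CS unfolding S_def by auto
      obtain X0 where X0: "X0 \<in> C" using False by auto
      have "filt (\<Union>C)"
        unfolding mv_filter_def
      proof (intro conjI)
        show "\<Union>C \<subseteq> A" using fX filtD(1) by blast
        show "n z \<in> \<Union>C" using fX[OF X0] filtD(2) X0 by blast
        show "\<forall>x\<in>\<Union>C. \<forall>y\<in>\<Union>C. x \<otimes> y \<in> \<Union>C"
        proof (intro ballI)
          fix x y assume "x \<in> \<Union>C" "y \<in> \<Union>C"
          then obtain X Y where XY: "X \<in> C" "Y \<in> C" "x \<in> X" "y \<in> Y" by auto
          show "x \<otimes> y \<in> \<Union>C"
          proof (cases "X \<subseteq> Y")
            case True then show ?thesis using XY fX filtD(3) by blast
          next
            case False then have "Y \<subseteq> X" using ch XY by blast
            then show ?thesis using XY fX filtD(3) by blast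
          qed
        qed
        show "\<forall>x\<in>\<Union>C. \<forall>y\<in>A. x \<preceq> y \<longrightarrow> y \<in> \<Union>C"
          using fX filtD(4) by blast
      qed
      moreover have "z \<notin> \<Union>C" using zX by auto
      moreover have "P \<subseteq> \<Union>C" using PX X0 by auto
      ultimately show ?thesis unfolding S_def by auto
    qed
  qed
  then obtain M where M: "M \<in> S" and Mmax: "\<forall>X\<in>S. M \<subseteq> X \<longrightarrow> X = M"
    using Zorn_Lemma2[of S] by blast
  have "M \<in> spec_M A p n z"
    unfolding spec_M_def
  proof (intro CollectI conjI allI impI)
    show "filt M" using M unfolding S_def by auto
    show "M \<noteq> A" using M unfolding S_def by auto
    fix G assume G: "filt G \<and> M \<subseteq> G \<and> G \<noteq> A"
    then have "z \<notin> G" using filt_z by blast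
    then have "G \<in> S" using G M unfolding S_def by auto
    then show "G = M" using Mmax G by auto
  qed
  then show ?thesis using M unfolding S_def by auto
qed

end

locale ssA = pav +
  assumes ss: "mv_semisimple A p n z"
begin

abbreviation "SP \<equiv> spec_M A p n z"
abbreviation hv :: "'a set \<Rightarrow> 'a \<Rightarrow> real" where "hv F x \<equiv> homF p n c F x"

lemma hv_neg: "F \<in> SP \<Longrightarrow> x \<in> A \<Longrightarrow> hv F (n x) = 1 - hv F x"
proof - assume "F \<in> SP" then interpret maxF A p n z c F by unfold_locales
  show "x \<in> A \<Longrightarrow> hv F (n x) = 1 - hv F x" by (rule h_neg) qed
lemma hv_add: "F \<in> SP \<Longrightarrow> x \<in> A \<Longrightarrow> y \<in> A \<Longrightarrow> hv F (p x y) = min (hv F x + hv F y) 1"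
proof - assume "F \<in> SP" then interpret maxF A p n z c F by unfold_locales
  show "x \<in> A \<Longrightarrow> y \<in> A \<Longrightarrow> hv F (p x y) = min (hv F x + hv F y) 1" by (rule h_add) qed
lemma hv_mul: "F \<in> SP \<Longrightarrow> x \<in> A \<Longrightarrow> y \<in> A \<Longrightarrow> hv F (x \<otimes> y) = max 0 (hv F x + hv F y - 1)"
proof - assume "F \<in> SP" then interpret maxF A p n z c F by unfold_locales
  show "x \<in> A \<Longrightarrow> y \<in> A \<Longrightarrow> hv F (x \<otimes> y) = max 0 (hv F x + hv F y - 1)" by (rule h_mul) qed
lemma hv01: "F \<in> SP \<Longrightarrow> x \<in> A \<Longrightarrow> 0 \<le> hv F x \<and> hv F x \<le> 1"
proof - assume "F \<in> SP" then interpret maxF A p n z c F by unfold_locales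
  show "x \<in> A \<Longrightarrow> 0 \<le> hv F x \<and> hv F x \<le> 1" using h0 h1 by auto qed
lemma hv_ker: "F \<in> SP \<Longrightarrow> x \<in> A \<Longrightarrow> hv F x = 1 \<longleftrightarrow> x \<in> F"
proof - assume "F \<in> SP" then interpret maxF A p n z c F by unfold_locales
  show "x \<in> A \<Longrightarrow> hv F x = 1 \<longleftrightarrow> x \<in> F" by (rule kernel) qed
lemma hv_c: "F \<in> SP \<Longrightarrow> 0 \<le> q \<Longrightarrow> q \<le> 1 \<Longrightarrow> hv F (c q) = of_rat q"
  using hom_const hom_F by blast
lemma hv_sup: "F \<in> SP \<Longrightarrow> x \<in> A \<Longrightarrow> y \<in> A \<Longrightarrow> hv F (x \<squnion> y) = max (hv F x) (hv F y)"
  using hv01[of F x] hv01[of F y] by (simp add: mv_sup_def hv_neg hv_add min_def max_def)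

lemma pw_le: assumes x: "x \<in> A" and y: "y \<in> A" and H: "\<And>F. F \<in> SP \<Longrightarrow> hv F x \<le> hv F y"
  shows "x \<preceq> y"
proof -
  have "p (n x) y \<in> A \<inter> \<Inter> SP"
  proof (intro IntI InterI)
    show "p (n x) y \<in> A" using x y by simp
    fix F assume F: "F \<in> SP"
    have "hv F (p (n x) y) = 1" using hv_add[OF F] hv_neg[OF F] H[OF F] x y by (simp add: min_def)
    then show "p (n x) y \<in> F" using hv_ker[OF F] x y by simp
  qed
  then show ?thesis using ss unfolding mv_semisimple_def mv_le_def by auto
qed

lemma le_pw: assumes F: "F \<in> SP" and x: "x \<in> A" and y: "y \<in> A" and le: "x \<preceq> y"
  shows "hv F x \<le> hv F y"
proof -
  have "hv F (p (n x) y) = 1" using le hv_ker[OF F] filtD(2)[OF maxD(1)[OF F]] unfolding mv_le_def by simp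
  then show ?thesis using hv_add[OF F] hv_neg[OF F] x y hv01[OF F x] by (simp add: min_def split: if_splits)
qed

lemma pw_eq: assumes x: "x \<in> A" and y: "y \<in> A" and H: "\<And>F. F \<in> SP \<Longrightarrow> hv F x = hv F y"
  shows "x = y"
  using le_antisym[OF x y] pw_le[OF x y] pw_le[OF y x] H by simp

end


primrec mvsum :: "('a\<Rightarrow>'a\<Rightarrow>'a) \<Rightarrow> 'a \<Rightarrow> nat \<Rightarrow> 'a \<Rightarrow> 'a" where
  "mvsum p z 0 x = z"
| "mvsum p z (Suc m) x = p x (mvsum p z m x)"

locale monA = ssA +
  fixes e
  assumes mon: "monadic_pavelka A p n c e"
begin

lemma eA[simp]: "x \<in> A \<Longrightarrow> e x \<in> A"
  and emono: "x \<in> A \<Longrightarrow> y \<in> A \<Longrightarrow> x \<preceq> y \<Longrightarrow> e x \<preceq> e y"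
  and eincr: "x \<in> A \<Longrightarrow> x \<preceq> e x"
  and eidem[simp]: "x \<in> A \<Longrightarrow> e (e x) = e x"
  and eneg[simp]: "x \<in> A \<Longrightarrow> e (n (e x)) = n (e x)"
  and econst: "0 \<le> r \<Longrightarrow> r \<le> 1 \<Longrightarrow> x \<in> A \<Longrightarrow> c r \<otimes> e x = e (c r \<otimes> x)"
  using mon zc unfolding monadic_pavelka_def by auto

abbreviation u where "u x \<equiv> univ_q n e x"
definition "B = {x \<in> A. e x = x}"

lemma uA[simp]: "x \<in> A \<Longrightarrow> u x \<in> A" by (simp add: univ_q_def)
lemma u_le: "x \<in> A \<Longrightarrow> u x \<preceq> x"
  unfolding univ_q_def using eincr[of "n x"] n_anti_iff[of "n x" "e (n x)"] by (metis eA nA nn n_anti)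
lemma u_mono: "x \<in> A \<Longrightarrow> y \<in> A \<Longrightarrow> x \<preceq> y \<Longrightarrow> u x \<preceq> u y"
  unfolding univ_q_def by (simp add: emono n_anti)
lemma BA: "b \<in> B \<Longrightarrow> b \<in> A" by (simp add: B_def)
lemma eB: "x \<in> A \<Longrightarrow> e x \<in> B" by (simp add: B_def)
lemma uB: "x \<in> A \<Longrightarrow> u x \<in> B" by (simp add: B_def univ_q_def)
lemma B_neg: "b \<in> B \<Longrightarrow> n b \<in> B" unfolding B_def by (metis (mono_tags, lifting) eneg mem_Collect_eq nA)
lemma B_u: "b \<in> B \<Longrightarrow> u b = b" unfolding univ_q_def using B_neg by (simp add: B_def)
lemma B_cmul: "b \<in> B \<Longrightarrow> 0 \<le> r \<Longrightarrow> r \<le> 1 \<Longrightarrow> c r \<otimes> b \<in> B"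
proof -
  assume b: "b \<in> B" and r: "0 \<le> r" "r \<le> 1"
  have bA: "b \<in> A" "e b = b" using b by (auto simp: B_def)
  have "c r \<otimes> e b = e (c r \<otimes> b)" by (rule econst[OF r bA(1)])
  then show ?thesis using bA r by (simp add: B_def)
qed
lemma e_max: "x \<in> A \<Longrightarrow> b \<in> B \<Longrightarrow> x \<preceq> b \<Longrightarrow> e x \<preceq> b"
  using emono[of x b] by (simp add: B_def)
lemma u_max: "x \<in> A \<Longrightarrow> b \<in> B \<Longrightarrow> b \<preceq> x \<Longrightarrow> b \<preceq> u x"
  using u_mono[of b x] B_u BA by simp
lemma B_I: "x \<in> A \<Longrightarrow> e x \<preceq> x \<Longrightarrow> x \<in> B"
  unfolding B_def using le_antisym eincr by auto
lemma B_I2: "x \<in> A \<Longrightarrow> u x = x \<Longrightarrow> x \<in> B"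
  using uB by metis

lemma e_one: "e (n z) = n z" using le_one[of "e (n z)"] eincr[of "n z"] le_antisym by simp
lemma one_B: "n z \<in> B" using e_one by (simp add: B_def)
lemma B_c: "0 \<le> r \<Longrightarrow> r \<le> 1 \<Longrightarrow> c r \<in> B"
  using B_cmul[OF one_B] by simp
lemma B_cplus: "b \<in> B \<Longrightarrow> 0 \<le> r \<Longrightarrow> r \<le> 1 \<Longrightarrow> p (c r) b \<in> B"
proof -
  assume b: "b \<in> B" and r: "0 \<le> r" "r \<le> 1"
  have "c (1 - r) \<otimes> n b \<in> B" using B_cmul[OF B_neg[OF b]] r by simp
  then have "n (c (1 - r) \<otimes> n b) \<in> B" by (rule B_neg)
  moreover have "n (c (1 - r) \<otimes> n b) = p (c r) b" using b r BA c_neg[of "1 - r"] by (simp add: mv_mult_def)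
  ultimately show ?thesis by simp
qed

abbreviation inf (infixl "\<sqinter>" 70) where "x \<sqinter> y \<equiv> n (n x \<squnion> n y)"
lemma infA[simp]: "x \<in> A \<Longrightarrow> y \<in> A \<Longrightarrow> x \<sqinter> y \<in> A" by simp
lemma hv_inf: "F \<in> SP \<Longrightarrow> x \<in> A \<Longrightarrow> y \<in> A \<Longrightarrow> hv F (x \<sqinter> y) = min (hv F x) (hv F y)"
  by (simp add: hv_sup hv_neg min_def max_def)
lemma B_inf: assumes b1: "b1 \<in> B" and b2: "b2 \<in> B" shows "b1 \<sqinter> b2 \<in> B"
proof -
  have A1: "b1 \<in> A" "b2 \<in> A" using b1 b2 BA by auto
  have "b1 \<sqinter> b2 \<preceq> b1" "b1 \<sqinter> b2 \<preceq> b2" using A1 by (auto intro!: pw_le simp: hv_inf)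
  then have "e (b1 \<sqinter> b2) \<preceq> b1" "e (b1 \<sqinter> b2) \<preceq> b2" using e_max b1 b2 A1 by auto
  then have "e (b1 \<sqinter> b2) \<preceq> b1 \<sqinter> b2" using A1 le_pw by (auto intro!: pw_le simp: hv_inf)
  then show ?thesis using B_I A1 by simp
qed

lemma R_eq: assumes G: "G \<in> SP" and F': "F' \<in> SP"
  shows "rel_R A p n z e G F' = (INF a\<in>A. min 1 (1 - hv F' (u a) + hv G a))"
  unfolding rel_R_def using quot_val_eq[OF G] quot_val_eq[OF F'] by simp

lemma R_bdd: assumes G: "G \<in> SP" and F': "F' \<in> SP"
  shows "bdd_below ((\<lambda>a. min 1 (1 - hv F' (u a) + hv G a)) ` A)"
proof (rule bdd_belowI)
  fix t assume "t \<in> (\<lambda>a. min 1 (1 - hv F' (u a) + hv G a)) ` A"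
  then obtain a where a: "a \<in> A" "t = min 1 (1 - hv F' (u a) + hv G a)" by auto
  then show "0 \<le> t" using hv01[OF F', of "u a"] hv01[OF G, of a] by simp
qed

lemma R_le: assumes G: "G \<in> SP" and F': "F' \<in> SP" and a: "a \<in> A"
  shows "rel_R A p n z e G F' \<le> min 1 (1 - hv F' (u a) + hv G a)"
  unfolding R_eq[OF G F'] by (rule cINF_lower[OF R_bdd[OF G F'] a])

lemma R_ge0: assumes G: "G \<in> SP" and F': "F' \<in> SP" shows "0 \<le> rel_R A p n z e G F'"
proof -
  have "A \<noteq> {}" using zA by blast
  then show ?thesis unfolding R_eq[OF G F'] using hv01[OF F'] hv01[OF G] by (intro cINF_greatest) auto
qed

lemma R1: assumes G: "G \<in> SP" and F': "F' \<in> SP" and R: "rel_R A p n z e G F' = 1" and b: "b \<in> B"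
  shows "hv G b = hv F' b"
proof -
  have bA: "b \<in> A" using b BA by simp
  have "1 \<le> min 1 (1 - hv F' (u b) + hv G b)" using R_le[OF G F' bA] R by simp
  then have l1: "hv F' b \<le> hv G b" using B_u[OF b] by simp
  have "1 \<le> min 1 (1 - hv F' (u (n b)) + hv G (n b))" using R_le[OF G F', of "n b"] R bA by simp
  then have "hv F' (n b) \<le> hv G (n b)" using B_u[OF B_neg[OF b]] by simp
  then show ?thesis using l1 hv_neg[OF G bA] hv_neg[OF F' bA] by simp
qed

lemma R1conv: assumes G: "G \<in> SP" and F': "F' \<in> SP" and H: "\<And>b. b \<in> B \<Longrightarrow> hv G b = hv F' b"
  shows "rel_R A p n z e G F' = 1"
proof -
  have "min 1 (1 - hv F' (u a) + hv G a) = 1" if a: "a \<in> A" for a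
  proof -
    have "hv F' (u a) = hv G (u a)" using H[OF uB[OF a]] by simp
    also have "\<dots> \<le> hv G a" using le_pw[OF G _ a u_le[OF a]] a by simp
    finally show ?thesis by simp
  qed
  then have "(INF a\<in>A. min 1 (1 - hv F' (u a) + hv G a)) = (INF a\<in>A. (1::real))"
    by (intro INF_cong) auto
  also have "\<dots> = 1" using zA by (intro cINF_const) blast
  finally show ?thesis using R_eq[OF G F'] by simp
qed

end

context monA begin

lemma hv_z: "F \<in> SP \<Longrightarrow> hv F z = 0" using hv_c[of F 0] c0 by simp
lemma hv_one: "F \<in> SP \<Longrightarrow> hv F (n z) = 1" using hv_neg[of F z] hv_z by simp

lemma mvpow_mono: "x \<in> A \<Longrightarrow> y \<in> A \<Longrightarrow> x \<preceq> y \<Longrightarrow> mvpow p n z m x \<preceq> mvpow p n z m y"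
  by (induct m) (auto intro: mul_mono2)

lemma hv_pow1: "F \<in> SP \<Longrightarrow> x \<in> A \<Longrightarrow> hv F x = 1 \<Longrightarrow> hv F (mvpow p n z m x) = 1"
  by (induct m) (auto simp: hv_one hv_mul)

lemma hv_imp: "F \<in> SP \<Longrightarrow> x \<in> A \<Longrightarrow> y \<in> A \<Longrightarrow> hv F (p (n x) y) = min (1 - hv F x + hv F y) 1"
  by (simp add: hv_add hv_neg add.commute)

lemma compact:
  assumes crisp: "\<forall>G\<in>SP. \<forall>F'\<in>SP. rel_R A p n z e G F' \<in> {0, 1}"
    and F': "F' \<in> SP" and P: "P \<in> A" and eps: "0 < \<epsilon>" "\<epsilon> \<le> 1"
    and H: "\<forall>G\<in>SP. P \<in> G \<longrightarrow> rel_R A p n z e G F' \<noteq> 1"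
  shows "\<exists>b\<in>B. 1 - of_rat \<epsilon> < hv F' b \<and> (\<forall>G\<in>SP. hv G P = 1 \<longrightarrow> hv G b < of_rat \<epsilon>)"
proof -
  have e01: "0 \<le> \<epsilon>" "\<epsilon> \<le> 1" using eps by auto
  define Q where "Q b = p (n (c \<epsilon>)) b" for b
  have QA: "b \<in> A \<Longrightarrow> Q b \<in> A" for b using e01 by (simp add: Q_def)
  have hvQ: "G \<in> SP \<Longrightarrow> b \<in> A \<Longrightarrow> hv G (Q b) = min (1 - of_rat \<epsilon> + hv G b) 1" for G b
    using hv_imp[of G "c \<epsilon>" b] hv_c[of G \<epsilon>] e01 by (simp add: Q_def)
  define Phi where "Phi = {y \<in> A. \<exists>b\<in>B. 1 - of_rat \<epsilon> < hv F' b \<and> (\<exists>m. mvpow p n z m (P \<otimes> Q b) \<preceq> y)}"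
  have PhiA: "Phi \<subseteq> A" by (auto simp: Phi_def)
  have one_Phi: "n z \<in> Phi"
  proof -
    have m0: "\<exists>m. mvpow p n z m (P \<otimes> Q (n z)) \<preceq> n z" by (rule exI[of _ 0]) simp
    moreover have "1 - of_rat \<epsilon> < hv F' (n z)" using hv_one[OF F'] eps by simp
    ultimately have "\<exists>b\<in>B. 1 - of_rat \<epsilon> < hv F' b \<and> (\<exists>m. mvpow p n z m (P \<otimes> Q b) \<preceq> n z)"
      using one_B by blast
    then show ?thesis unfolding Phi_def by simp
  qed
  have P_Phi: "P \<in> Phi"
  proof -
    have "Q (n z) = n z" using e01 by (simp add: Q_def)
    then have "mvpow p n z 1 (P \<otimes> Q (n z)) = P" using P by simp
    then have "mvpow p n z 1 (P \<otimes> Q (n z)) \<preceq> P" using P by simp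
    then have m0: "\<exists>m. mvpow p n z m (P \<otimes> Q (n z)) \<preceq> P" by blast
    moreover have "1 - of_rat \<epsilon> < hv F' (n z)" using hv_one[OF F'] eps by simp
    ultimately have "\<exists>b\<in>B. 1 - of_rat \<epsilon> < hv F' b \<and> (\<exists>m. mvpow p n z m (P \<otimes> Q b) \<preceq> P)"
      using one_B by blast
    then show ?thesis using P unfolding Phi_def by simp
  qed
  have c1: "y1 \<otimes> y2 \<in> Phi" if y1: "y1 \<in> Phi" and y2: "y2 \<in> Phi" for y1 y2
  proof -
    obtain b1 m1 where b1: "b1 \<in> B" "1 - of_rat \<epsilon> < hv F' b1" and l1: "mvpow p n z m1 (P \<otimes> Q b1) \<preceq> y1"
      and y1A: "y1 \<in> A" using y1 unfolding Phi_def by blast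
    obtain b2 m2 where b2: "b2 \<in> B" "1 - of_rat \<epsilon> < hv F' b2" and l2: "mvpow p n z m2 (P \<otimes> Q b2) \<preceq> y2"
      and y2A: "y2 \<in> A" using y2 unfolding Phi_def by blast
    have bA: "b1 \<in> A" "b2 \<in> A" using b1 b2 BA by auto
    define b where "b = b1 \<sqinter> b2"
    have b: "b \<in> B" using B_inf b1 b2 by (simp add: b_def)
    have bbA: "b \<in> A" using bA by (simp add: b_def)
    have hb: "1 - of_rat \<epsilon> < hv F' b" using b1 b2 hv_inf[OF F' bA] by (simp add: b_def)
    have "Q b \<preceq> Q b1"
    proof (rule pw_le[OF QA[OF bbA] QA[OF bA(1)]])
      fix G assume G: "G \<in> SP"
      have "hv G b \<le> hv G b1" using hv_inf[OF G bA] by (simp add: b_def)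
      then show "hv G (Q b) \<le> hv G (Q b1)" using hvQ[OF G bbA] hvQ[OF G bA(1)] by simp
    qed
    then have q1: "P \<otimes> Q b \<preceq> P \<otimes> Q b1" using mul_mono2[OF P _ P, of "Q b" "Q b1"] QA bA bbA P by simp
    have "Q b \<preceq> Q b2"
    proof (rule pw_le[OF QA[OF bbA] QA[OF bA(2)]])
      fix G assume G: "G \<in> SP"
      have "hv G b \<le> hv G b2" using hv_inf[OF G bA] by (simp add: b_def)
      then show "hv G (Q b) \<le> hv G (Q b2)" using hvQ[OF G bbA] hvQ[OF G bA(2)] by simp
    qed
    then have q2: "P \<otimes> Q b \<preceq> P \<otimes> Q b2" using mul_mono2[OF P _ P, of "Q b" "Q b2"] QA bA bbA P by simp
    have "mvpow p n z m1 (P \<otimes> Q b) \<preceq> y1"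
      using le_trans[OF _ _ y1A mvpow_mono[OF _ _ q1] l1] P QA bA bbA by simp
    moreover have "mvpow p n z m2 (P \<otimes> Q b) \<preceq> y2"
      using le_trans[OF _ _ y2A mvpow_mono[OF _ _ q2] l2] P QA bA bbA by simp
    ultimately have "mvpow p n z m1 (P \<otimes> Q b) \<otimes> mvpow p n z m2 (P \<otimes> Q b) \<preceq> y1 \<otimes> y2"
      using mul_mono2 P QA bbA y1A y2A by simp
    then have "mvpow p n z (m1 + m2) (P \<otimes> Q b) \<preceq> y1 \<otimes> y2" using mvpow_add P QA bbA by simp
    then show ?thesis using b hb y1A y2A unfolding Phi_def by auto
  qed
  have c2: "y2 \<in> Phi" if y1: "y1 \<in> Phi" and y2: "y2 \<in> A" and le: "y1 \<preceq> y2" for y1 y2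
  proof -
    obtain b1 m1 where b1: "b1 \<in> B" "1 - of_rat \<epsilon> < hv F' b1" and l1: "mvpow p n z m1 (P \<otimes> Q b1) \<preceq> y1"
      and y1A: "y1 \<in> A" using y1 unfolding Phi_def by blast
    have "mvpow p n z m1 (P \<otimes> Q b1) \<preceq> y2" using le_trans[OF _ y1A y2 l1 le] P QA b1 BA by simp
    then show ?thesis using b1 y2 unfolding Phi_def by auto
  qed
  have fPhi: "filt Phi" unfolding mv_filter_def using PhiA one_Phi c1 c2 by blast
  show ?thesis
  proof (cases "z \<in> Phi")
    case True
    then obtain b m where b: "b \<in> B" "1 - of_rat \<epsilon> < hv F' b" and l: "mvpow p n z m (P \<otimes> Q b) \<preceq> z"
      unfolding Phi_def by blast
    have bA: "b \<in> A" using b BA by simp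
    have "hv G b < of_rat \<epsilon>" if G: "G \<in> SP" and hP: "hv G P = 1" for G
    proof (rule ccontr)
      assume "\<not> ?thesis"
      then have "hv G (Q b) = 1" using hvQ[OF G bA] by simp
      then have "hv G (P \<otimes> Q b) = 1" using hv_mul[OF G P QA[OF bA]] hP by simp
      then have "hv G (mvpow p n z m (P \<otimes> Q b)) = 1" using hv_pow1[OF G] P QA bA by simp
      moreover have "hv G (mvpow p n z m (P \<otimes> Q b)) \<le> hv G z" using le_pw[OF G _ zA l] P QA bA by simp
      ultimately show False using hv_z[OF G] by simp
    qed
    then show ?thesis using b by blast
  next
    case False
    obtain G where G: "G \<in> SP" and PG: "Phi \<subseteq> G" using zorn_max[OF fPhi False] by blast
    have "P \<in> G" using P_Phi PG by auto
    then have "rel_R A p n z e G F' \<noteq> 1" using H G by auto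
    then have R0: "rel_R A p n z e G F' = 0" using crisp G F' by auto
    have "A \<noteq> {}" using zA by blast
    then have "\<exists>a\<in>A. min 1 (1 - hv F' (u a) + hv G a) < of_rat \<epsilon>"
      using R0 R_eq[OF G F'] cINF_less_iff[OF _ R_bdd[OF G F'], of "of_rat \<epsilon>"] eps by simp
    then obtain a where a: "a \<in> A" and lt: "min 1 (1 - hv F' (u a) + hv G a) < of_rat \<epsilon>" by blast
    have lt2: "1 - hv F' (u a) + hv G a < of_rat \<epsilon>" using lt eps by (simp add: min_def split: if_splits)
    define b where "b = u a"
    have b: "b \<in> B" "b \<in> A" using uB a by (auto simp: b_def)
    have hGb: "hv G b \<le> hv G a" using le_pw[OF G _ a u_le[OF a]] a by (simp add: b_def)
    have hF'b: "1 - of_rat \<epsilon> < hv F' b" using lt2 hv01[OF G a] by (simp add: b_def)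
    have hGa: "hv G b < of_rat \<epsilon>" using lt2 hv01[OF F', of b] hGb b by (simp add: b_def)
    have "mvpow p n z 1 (P \<otimes> Q b) \<preceq> P \<otimes> Q b" using P QA b by simp
    then have "\<exists>m. mvpow p n z m (P \<otimes> Q b) \<preceq> P \<otimes> Q b" by blast
    then have "\<exists>b'\<in>B. 1 - of_rat \<epsilon> < hv F' b' \<and> (\<exists>m. mvpow p n z m (P \<otimes> Q b') \<preceq> P \<otimes> Q b)"
      using b hF'b by blast
    then have "P \<otimes> Q b \<in> Phi" using P QA b unfolding Phi_def by simp
    then have "P \<otimes> Q b \<in> G" using PG by auto
    then have "hv G (P \<otimes> Q b) = 1" using hv_ker[OF G] P QA b by simp
    then have "hv G (Q b) = 1" using hv_mul[OF G P QA[OF b(2)]] hv01[OF G P] hv01[OF G QA[OF b(2)]]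
      by (simp add: max_def split: if_splits)
    then have "of_rat \<epsilon> \<le> hv G b" using hvQ[OF G b(2)] by (simp add: min_def split: if_splits)
    then show ?thesis using hGa by simp
  qed
qed

end

context monA begin

abbreviation crisp where "crisp \<equiv> (\<forall>G\<in>SP. \<forall>F'\<in>SP. rel_R A p n z e G F' \<in> {0, 1})"
abbreviation iii where "iii \<equiv> (\<forall>x\<in>A. \<forall>y\<in>A. u x \<otimes> u y \<preceq> u (x \<otimes> y))"

lemma i_iii: assumes cr: crisp and x: "x \<in> A" and y: "y \<in> A"
  shows "u x \<otimes> u y \<preceq> u (x \<otimes> y)"
proof (rule pw_le)
  show "u x \<otimes> u y \<in> A" "u (x \<otimes> y) \<in> A" using x y by auto
  fix F' assume F': "F' \<in> SP"
  define w0 where "w0 = u x \<otimes> u y"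
  have w0A: "w0 \<in> A" using x y by (simp add: w0_def)
  have w0xy: "w0 \<preceq> x \<otimes> y" unfolding w0_def using mul_mono2 u_le x y by simp
  show "hv F' (u x \<otimes> u y) \<le> hv F' (u (x \<otimes> y))"
  proof (rule ccontr)
    assume "\<not> ?thesis"
    then have lt: "hv F' (u (x \<otimes> y)) < hv F' w0" by (simp add: w0_def)
    define D where "D = hv F' w0 - hv F' (u (x \<otimes> y))"
    have D: "0 < D" using lt by (simp add: D_def)
    have g0: "0 < hv F' w0" using lt hv01[OF F', of "u (x \<otimes> y)"] x y by simp
    have g1: "hv F' w0 \<le> 1" using hv01[OF F' w0A] by simp
    obtain r where r: "max 0 (hv F' w0 - D / 3) < of_rat r" "of_rat r < hv F' w0"
      using of_rat_dense[of "max 0 (hv F' w0 - D / 3)" "hv F' w0"] g0 D by auto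
    have "0 < (of_rat r :: real)" using r by auto
    moreover have "(of_rat r :: real) < 1" using r g1 by linarith
    ultimately have "0 < (of_rat r :: real)" "(of_rat r :: real) < 1" by auto
    then have r01: "0 < r" "r < 1" by simp_all
    obtain \<epsilon> where eps: "0 < (of_rat \<epsilon> :: real)" "of_rat \<epsilon> < min (D / 3) (1 - of_rat r)"
      using of_rat_dense[of 0 "min (D / 3) (1 - of_rat r)"] D r01 by auto
    have er: "(of_rat \<epsilon> :: real) < 1 - of_rat r" "(of_rat \<epsilon> :: real) < D / 3" using eps(2) by auto
    have "(0::real) < of_rat r" using r01 by simp
    then have "(of_rat \<epsilon> :: real) \<le> 1" using er by linarith
    then have e01: "0 < \<epsilon>" "\<epsilon> \<le> 1" using eps by simp_all
    define P where "P = p (n w0) (c r)"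
    have PA: "P \<in> A" using w0A r01 by (simp add: P_def)
    have hvP: "G \<in> SP \<Longrightarrow> hv G P = min (1 - hv G w0 + of_rat r) 1" for G
      using hv_imp[OF _ w0A, of G "c r"] hv_c[of G r] r01 by (simp add: P_def)
    have H: "\<forall>G\<in>SP. P \<in> G \<longrightarrow> rel_R A p n z e G F' \<noteq> 1"
    proof (intro ballI impI notI)
      fix G assume G: "G \<in> SP" and PG: "P \<in> G" and R: "rel_R A p n z e G F' = 1"
      have "hv G P = 1" using hv_ker[OF G PA] PG by simp
      then have "hv G w0 \<le> of_rat r" using hvP[OF G] by (simp add: min_def split: if_splits)
      moreover have "hv G w0 = hv F' w0"
        using R1[OF G F' R uB[OF x]] R1[OF G F' R uB[OF y]] hv_mul[OF G] hv_mul[OF F'] x y by (simp add: w0_def)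
      ultimately show False using r by simp
    qed
    obtain b where b: "b \<in> B" "1 - of_rat \<epsilon> < hv F' b" and bs: "\<forall>G\<in>SP. hv G P = 1 \<longrightarrow> hv G b < of_rat \<epsilon>"
      using compact[OF cr F' PA e01 H] by blast
    have bA: "b \<in> A" using b BA by simp
    define d where "d = c r \<otimes> b"
    have dB: "d \<in> B" using B_cmul[OF b(1)] r01 by (simp add: d_def)
    have dA: "d \<in> A" using dB BA by simp
    have hvd: "G \<in> SP \<Longrightarrow> hv G d = max 0 (of_rat r + hv G b - 1)" for G
      using hv_mul[OF _ _ bA, of G "c r"] hv_c[of G r] r01 by (simp add: d_def)
    have "d \<preceq> w0"
    proof (rule pw_le[OF dA w0A])
      fix G assume G: "G \<in> SP"
      show "hv G d \<le> hv G w0"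
      proof (cases "hv G w0 \<le> of_rat r")
        case True
        then have "hv G P = 1" using hvP[OF G] by simp
        then have "hv G b < of_rat \<epsilon>" using bs G by auto
        then show ?thesis using hvd[OF G] eps hv01[OF G w0A] by simp
      next
        case False
        have rr: "(0::real) < of_rat r" using r01 by simp
        have "hv G d \<le> of_rat r" unfolding hvd[OF G] max.bounded_iff
          using rr hv01[OF G bA] by (intro conjI; linarith)
        then show ?thesis using False by linarith
      qed
    qed
    then have "d \<preceq> x \<otimes> y" using le_trans[OF dA w0A _ _ w0xy] x y by simp
    then have "d \<preceq> u (x \<otimes> y)" using u_max dB x y by simp
    then have "hv F' d \<le> hv F' (u (x \<otimes> y))" using le_pw[OF F' dA] x y by simp
    moreover have "hv F' d \<ge> of_rat r + hv F' b - 1" using hvd[OF F'] by simp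
    moreover have rl: "hv F' w0 - D / 3 < of_rat r" using r(1) by simp
    moreover have "D = hv F' w0 - hv F' (u (x \<otimes> y))" by (simp add: D_def)
    ultimately show False using b(2) er D by linarith
  qed
qed

lemma iii_Bmul: assumes h: iii and b1: "b1 \<in> B" and b2: "b2 \<in> B" shows "b1 \<otimes> b2 \<in> B"
proof -
  have A1: "b1 \<in> A" "b2 \<in> A" using b1 b2 BA by auto
  have "b1 \<otimes> b2 \<preceq> u (b1 \<otimes> b2)" using h A1 B_u b1 b2 by force
  moreover have "u (b1 \<otimes> b2) \<preceq> b1 \<otimes> b2" using u_le A1 by simp
  ultimately have "u (b1 \<otimes> b2) = b1 \<otimes> b2" using le_antisym A1 by simp
  then show ?thesis using B_I2 A1 by simp
qed

lemma iii_Badd: assumes h: iii and b1: "b1 \<in> B" and b2: "b2 \<in> B" shows "p b1 b2 \<in> B"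
proof -
  have "n b1 \<otimes> n b2 \<in> B" using iii_Bmul[OF h B_neg[OF b1] B_neg[OF b2]] .
  then have "n (n b1 \<otimes> n b2) \<in> B" by (rule B_neg)
  then show ?thesis using b1 b2 BA by (simp add: mv_mult_def)
qed

lemma mvsumA: "t \<in> A \<Longrightarrow> mvsum p z m t \<in> A" by (induct m) auto
lemma mvsumB: "iii \<Longrightarrow> t \<in> B \<Longrightarrow> mvsum p z m t \<in> B"
  by (induct m) (auto intro: iii_Badd B_c[of 0, simplified c0])
lemma hv_sum: "F \<in> SP \<Longrightarrow> t \<in> A \<Longrightarrow> hv F (mvsum p z m t) = min 1 (of_nat m * hv F t)"
proof (induct m)
  case 0 then show ?case using hv_z by simp
next
  case (Suc m) then show ?case using hv_add[OF Suc(2) Suc(3) mvsumA[OF Suc(3)]] hv01[OF Suc(2) Suc(3)]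
    by (auto simp: min_def algebra_simps)
qed

lemma iii_i: assumes h: iii shows crisp
proof (intro ballI)
  fix G F' assume G: "G \<in> SP" and F': "F' \<in> SP"
  show "rel_R A p n z e G F' \<in> {0, 1}"
  proof (cases "\<forall>b\<in>B. hv G b = hv F' b")
    case True then show ?thesis using R1conv[OF G F'] by simp
  next
    case False
    then obtain b0 where b0: "b0 \<in> B" "hv G b0 \<noteq> hv F' b0" by blast
    have "\<exists>b\<in>B. hv G b < hv F' b"
    proof (cases "hv G b0 < hv F' b0")
      case True then show ?thesis using b0 by blast
    next
      case False
      then have "hv G (n b0) < hv F' (n b0)" using b0 hv_neg[OF G] hv_neg[OF F'] BA by simp
      then show ?thesis using B_neg[OF b0(1)] by blast
    qed
    then obtain b where b: "b \<in> B" "hv G b < hv F' b" by blast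
    have bA: "b \<in> A" using b BA by simp
    obtain q where q: "hv G b < of_rat q" "of_rat q < hv F' b" using of_rat_dense b by blast
    have "0 \<le> (of_rat q :: real)" "(of_rat q :: real) \<le> 1" using q hv01[OF G bA] hv01[OF F' bA] by linarith+
    then have q01: "0 \<le> q" "q \<le> 1" by simp_all
    obtain m :: nat where m: "1 / (hv F' b - of_rat q) < of_nat m" using reals_Archimedean2 by blast
    have m1: "1 \<le> of_nat m * (hv F' b - of_rat q)" using m q by (simp add: field_simps)
    define t where "t = c (1 - q) \<otimes> b"
    have tB: "t \<in> B" using B_cmul[OF b(1)] q01 by (simp add: t_def)
    have tA: "t \<in> A" using tB BA by simp
    have hvt: "F \<in> SP \<Longrightarrow> hv F t = max 0 (hv F b - of_rat q)" for F
      using hv_mul[OF _ _ bA, of F "c (1 - q)"] hv_c[of F "1 - q"] q01 by (simp add: t_def of_rat_diff)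
    define d where "d = mvsum p z m t"
    have dB: "d \<in> B" using mvsumB[OF h tB] by (simp add: d_def)
    have dA: "d \<in> A" using dB BA by simp
    have dG: "hv G d = 0" using hv_sum[OF G tA] hvt[OF G] q by (simp add: d_def)
    have dF: "hv F' d = 1" using hv_sum[OF F' tA] hvt[OF F'] q m1 by (simp add: d_def min_def)
    have "rel_R A p n z e G F' \<le> min 1 (1 - hv F' (u d) + hv G d)" by (rule R_le[OF G F' dA])
    then have "rel_R A p n z e G F' \<le> 0" using B_u[OF dB] dG dF by simp
    then show ?thesis using R_ge0[OF G F'] by simp
  qed
qed

end

context monA begin

lemma rep: assumes cr: crisp and F': "F' \<in> SP" and a: "a \<in> A" and s: "0 < s" "of_rat s < hv F' (e a)"
  shows "\<exists>G\<in>SP. (\<forall>b\<in>B. hv G b = hv F' b) \<and> of_rat s \<le> hv G a"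
proof (rule ccontr)
  assume neg: "\<not> ?thesis"
  have "hv F' (e a) \<le> 1" using hv01[OF F', of "e a"] a by simp
  then have "(of_rat s :: real) < 1" using s(2) by linarith
  then have s1: "s < 1" by simp
  define \<epsilon> where "\<epsilon> = s / 2"
  have e01: "0 < \<epsilon>" "\<epsilon> \<le> 1" using s s1 by (simp_all add: \<epsilon>_def)
  define P where "P = p (n (c s)) a"
  have PA: "P \<in> A" using a s s1 by (simp add: P_def)
  have hvP: "G \<in> SP \<Longrightarrow> hv G P = min (1 - of_rat s + hv G a) 1" for G
    using hv_imp[OF _ _ a, of G "c s"] hv_c[of G s] s s1 by (simp add: P_def)
  have H: "\<forall>G\<in>SP. P \<in> G \<longrightarrow> rel_R A p n z e G F' \<noteq> 1"
  proof (intro ballI impI notI)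
    fix G assume G: "G \<in> SP" and PG: "P \<in> G" and R: "rel_R A p n z e G F' = 1"
    have "hv G P = 1" using hv_ker[OF G PA] PG by simp
    then have "of_rat s \<le> hv G a" using hvP[OF G] by (simp add: min_def split: if_splits)
    then show False using neg G R1[OF G F' R] by blast
  qed
  obtain b where b: "b \<in> B" "1 - of_rat \<epsilon> < hv F' b" and bs: "\<forall>G\<in>SP. hv G P = 1 \<longrightarrow> hv G b < of_rat \<epsilon>"
    using compact[OF cr F' PA e01 H] by blast
  have bA: "b \<in> A" using b BA by simp
  define k where "k = 1 - s + \<epsilon>"
  have k01: "0 \<le> k" "k \<le> 1" using s s1 by (simp_all add: k_def \<epsilon>_def)
  define d where "d = p (c s) (c k \<otimes> n b)"
  have dB: "d \<in> B" unfolding d_def using B_cplus[OF B_cmul[OF B_neg[OF b(1)] k01]] s s1 by simp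
  have dA: "d \<in> A" using dB BA by simp
  have hvd: "G \<in> SP \<Longrightarrow> hv G d = min (of_rat s + max 0 (of_rat k - hv G b)) 1" for G
    using hv_add[OF _ _ mulA[OF _ nA[OF bA]], of G "c s" "c k"] hv_mul[OF _ _ nA[OF bA], of G "c k"]
      hv_neg[OF _ bA, of G] hv_c[of G s] hv_c[of G k] s s1 k01 by (simp add: d_def)
  have "a \<preceq> d"
  proof (rule pw_le[OF a dA])
    fix G assume G: "G \<in> SP"
    show "hv G a \<le> hv G d"
    proof (cases "of_rat s \<le> hv G a")
      case True
      then have "hv G P = 1" using hvP[OF G] by simp
      then have "hv G b < of_rat \<epsilon>" using bs G by auto
      then have "1 < of_rat s + (of_rat k - hv G b)" by (simp add: k_def of_rat_add of_rat_diff)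
      then have "hv G d = 1" using hvd[OF G] by simp
      then show ?thesis using hv01[OF G a] by simp
    next
      case False
      have "(of_rat s :: real) \<le> 1" using s1 by simp
      then have "of_rat s \<le> hv G d" using hvd[OF G] by simp
      then show ?thesis using False by simp
    qed
  qed
  then have "e a \<preceq> d" using e_max a dB by simp
  then have "hv F' (e a) \<le> hv F' d" using le_pw[OF F'] a dA by simp
  moreover have "of_rat k - hv F' b \<le> (0::real)" using b(2)
    by (simp add: k_def \<epsilon>_def of_rat_add of_rat_diff of_rat_divide)
  then have "hv F' d = of_rat s" using hvd[OF F'] s1 by simp
  ultimately show False using s by simp
qed

lemma iii_Bsup: "iii \<Longrightarrow> b1 \<in> B \<Longrightarrow> b2 \<in> B \<Longrightarrow> b1 \<squnion> b2 \<in> B"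
  unfolding mv_sup_def by (intro iii_Badd B_neg) auto

lemma i_orig: assumes cr: crisp shows "orig_monadic A p n c e"
proof -
  have h3: iii using i_iii[OF cr] by blast
  have C1: "\<forall>x\<in>A. x \<preceq> e x" using eincr by blast
  have C2: "e (x \<squnion> y) = e x \<squnion> e y" if x: "x \<in> A" and y: "y \<in> A" for x y
  proof (rule le_antisym)
    show "e (x \<squnion> y) \<preceq> e x \<squnion> e y"
    proof (rule e_max)
      show "e x \<squnion> e y \<in> B" using iii_Bsup[OF h3 eB[OF x] eB[OF y]] .
      show "x \<squnion> y \<preceq> e x \<squnion> e y"
      proof (rule pw_le)
        fix F assume F: "F \<in> SP"
        have "max (hv F x) (hv F y) \<le> max (hv F (e x)) (hv F (e y))"
          using le_pw[OF F x _ eincr[OF x]] le_pw[OF F y _ eincr[OF y]] x y by (intro max.mono) simp_all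
        then show "hv F (x \<squnion> y) \<le> hv F (e x \<squnion> e y)" using hv_sup[OF F] x y by simp
      qed (use x y in simp_all)
    qed (use x y in simp)
    show "e x \<squnion> e y \<preceq> e (x \<squnion> y)"
      using sup_least[OF eA[OF x] eA[OF y] eA[OF supA[OF x y]]] emono[OF x supA[OF x y] sup_ge1[OF x y]]
        emono[OF y supA[OF x y] sup_ge2[OF x y]] by simp
  qed (use x y in simp_all)
  have C4: "e (p (e x) (e y)) = p (e x) (e y)" if x: "x \<in> A" and y: "y \<in> A" for x y
    using iii_Badd[OF h3 eB[OF x] eB[OF y]] by (simp add: B_def)
  have C5: "e (p x x) = p (e x) (e x)" if x: "x \<in> A" for x
  proof (rule le_antisym)
    show "e (p x x) \<preceq> p (e x) (e x)"
    proof (rule e_max)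
      show "p (e x) (e x) \<in> B" using iii_Badd[OF h3 eB[OF x] eB[OF x]] .
      show "p x x \<preceq> p (e x) (e x)"
      proof (rule pw_le)
        fix F assume F: "F \<in> SP"
        have "hv F x \<le> hv F (e x)" using le_pw[OF F x _ eincr[OF x]] x by simp
        then have "min (hv F x + hv F x) 1 \<le> min (hv F (e x) + hv F (e x)) 1" by simp
        then show "hv F (p x x) \<le> hv F (p (e x) (e x))" using hv_add[OF F] x by simp
      qed (use x in simp_all)
    qed (use x in simp)
    show "p (e x) (e x) \<preceq> e (p x x)"
    proof (rule pw_le)
      fix F' assume F': "F' \<in> SP"
      show "hv F' (p (e x) (e x)) \<le> hv F' (e (p x x))"
      proof (rule ccontr)
        assume "\<not> ?thesis"
        moreover have "hv F' (p (e x) (e x)) = min (2 * hv F' (e x)) 1" using hv_add[OF F' eA[OF x] eA[OF x]] by simp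
        ultimately have lt: "hv F' (e (p x x)) < min (2 * hv F' (e x)) 1" by linarith
        have w0: "0 \<le> hv F' (e (p x x))" using hv01[OF F'] x by simp
        obtain s where s: "max 0 (hv F' (e (p x x)) / 2) < of_rat s" "of_rat s < hv F' (e x)"
          using of_rat_dense[of "max 0 (hv F' (e (p x x)) / 2)" "hv F' (e x)"] lt w0 by auto
        have s0: "0 < s" using s(1) by simp
        obtain G where G: "G \<in> SP" and agree: "\<forall>b\<in>B. hv G b = hv F' b" and sG: "of_rat s \<le> hv G x"
          using rep[OF cr F' x s0 s(2)] by blast
        have "hv F' (e (p x x)) = hv G (e (p x x))" using agree eB x by simp
        also have "\<dots> \<ge> hv G (p x x)" using le_pw[OF G _ _ eincr] x by simp
        finally have "min (hv G x + hv G x) 1 \<le> hv F' (e (p x x))" using hv_add[OF G x x] by simp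
        moreover have w1: "hv F' (e (p x x)) < 1" using lt by simp
        moreover have w2: "hv F' (e (p x x)) < 2 * of_rat s" using s(1) by simp
        ultimately show False using sG by (auto simp: min_le_iff_disj)
      qed
    qed (use x in simp_all)
  qed (use x in simp_all)
  have C6: "e (x \<otimes> x) = e x \<otimes> e x" if x: "x \<in> A" for x
  proof (rule le_antisym)
    show "e (x \<otimes> x) \<preceq> e x \<otimes> e x"
    proof (rule e_max)
      show "e x \<otimes> e x \<in> B" using iii_Bmul[OF h3 eB[OF x] eB[OF x]] .
      show "x \<otimes> x \<preceq> e x \<otimes> e x" using mul_mono2 eincr x by simp
    qed (use x in simp)
    show "e x \<otimes> e x \<preceq> e (x \<otimes> x)"
    proof (rule pw_le)
      fix F' assume F': "F' \<in> SP"
      show "hv F' (e x \<otimes> e x) \<le> hv F' (e (x \<otimes> x))"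
      proof (rule ccontr)
        assume "\<not> ?thesis"
        moreover have "hv F' (e x \<otimes> e x) = max 0 (2 * hv F' (e x) - 1)" using hv_mul[OF F' eA[OF x] eA[OF x]] by simp
        ultimately have lt: "hv F' (e (x \<otimes> x)) < max 0 (2 * hv F' (e x) - 1)" by linarith
        have w0: "0 \<le> hv F' (e (x \<otimes> x))" using hv01[OF F'] x by simp
        then have lt2: "hv F' (e (x \<otimes> x)) < 2 * hv F' (e x) - 1" using lt by (simp add: max_def split: if_splits)
        obtain s where s: "max 0 ((hv F' (e (x \<otimes> x)) + 1) / 2) < of_rat s" "of_rat s < hv F' (e x)"
          using of_rat_dense[of "max 0 ((hv F' (e (x \<otimes> x)) + 1) / 2)" "hv F' (e x)"] lt2 w0 by auto
        have s0: "0 < s" using s(1) by simp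
        obtain G where G: "G \<in> SP" and agree: "\<forall>b\<in>B. hv G b = hv F' b" and sG: "of_rat s \<le> hv G x"
          using rep[OF cr F' x s0 s(2)] by blast
        have "hv F' (e (x \<otimes> x)) = hv G (e (x \<otimes> x))" using agree eB x by simp
        also have "\<dots> \<ge> hv G (x \<otimes> x)" using le_pw[OF G _ _ eincr] x by simp
        finally have "max 0 (hv G x + hv G x - 1) \<le> hv F' (e (x \<otimes> x))" using hv_mul[OF G x x] by simp
        moreover have "(hv F' (e (x \<otimes> x)) + 1) / 2 < of_rat s" using s(1) by simp
        ultimately show False using sG by (auto simp: max_def split: if_splits)
      qed
    qed (use x in simp_all)
  qed (use x in simp_all)
  have C7: "e (c r) = c r" if "0 \<le> r" "r \<le> 1" for r using B_c[OF that] by (simp add: B_def)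
  show ?thesis unfolding orig_monadic_def using C1 C2 C4 C5 C6 C7 c0 by (simp add: eneg)
qed

lemma orig_iii: assumes o: "orig_monadic A p n c e" shows iii
proof (intro ballI)
  fix x y assume x: "x \<in> A" and y: "y \<in> A"
  have "e (p (e (n x)) (e (n y))) = p (e (n x)) (e (n y))" using o x y unfolding orig_monadic_def by simp
  then have "p (e (n x)) (e (n y)) \<in> B" using x y by (simp add: B_def)
  then have nB: "n (p (e (n x)) (e (n y))) \<in> B" by (rule B_neg)
  have eq: "n (p (e (n x)) (e (n y))) = u x \<otimes> u y" using x y by (simp add: mv_mult_def univ_q_def)
  have "u x \<otimes> u y \<preceq> x \<otimes> y" using mul_mono2 u_le x y by simp
  then show "u x \<otimes> u y \<preceq> u (x \<otimes> y)" using u_max[of "x \<otimes> y" "u x \<otimes> u y"] nB eq x y by simp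
qed

end


theorem theorem16:
  fixes A :: "'a set" and p :: "'a \<Rightarrow> 'a \<Rightarrow> 'a" and n :: "'a \<Rightarrow> 'a"
    and c :: "rat \<Rightarrow> 'a" and e :: "'a \<Rightarrow> 'a"
  assumes "monadic_pavelka A p n c e"
    and "mv_semisimple A p n (c 0)"
  shows "((\<forall>F\<in>spec_M A p n (c 0). \<forall>F'\<in>spec_M A p n (c 0).
             rel_R A p n (c 0) e F F' \<in> {0, 1})
          \<longleftrightarrow> orig_monadic A p n c e)
       \<and> (orig_monadic A p n c e
          \<longleftrightarrow> (\<forall>x\<in>A. \<forall>y\<in>A. mv_le p n (c 0) (mv_mult p n (univ_q n e x) (univ_q n e y))
                                               (univ_q n e (mv_mult p n x y))))"
proof -
  have pv: "pavelka A p n c" using assms(1) unfolding monadic_pavelka_def by blast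
  then have mvA: "mv_algebra A p n (c 0)" unfolding pavelka_def by blast
  interpret monA A p n "c 0" c e
    by (unfold_locales; (rule mvA pv assms refl)?)
  show ?thesis using i_orig orig_iii iii_i by blast
qed


end
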